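(* Let $b_1,\dots,b_k$ be positive integers and $n_1,\dots,n_k$ integers with $\sum_in_ib_i=0$, and let $\alpha^{\mathfrak a}=\prod_{i=1}^k\big(c^{\mathfrak a}_1c^{\mathfrak a}_2\cdots c^{\mathfrak a}_{b_i}\big)^{n_i}$. Then for every positive integer $r$, $$\widehat{per}(r\circ\alpha^{\mathfrak a})=\Big(\prod_{i=1}^k\Big(\frac{b_i!\,(r!)^{b_i}}{(rb_i)!}\,(rb_ip)!\Big)^{n_i}\Big)_p\in\mathbb Q_{p\to\infty}$$ (in particular $\widehat{per}(\alpha^{\mathfrak a})=\big(\prod_i(b_ip)!^{n_i}\big)_p$), and the degree-$0$ part of $\alpha^{\mathfrak a}$ is $\alpha^{\mathfrak a}_0=\prod_{i=1}^kb_i!^{n_i}$.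
   Context: $\mathcal M^{(1)}=\mathbb Q[\zeta^{\mathfrak a}(3),\zeta^{\mathfrak a}(5),\dots]$ is the free polynomial subalgebra of depth-one motivic MZVs in $\mathcal A=\mathcal H/\zeta^{\mathfrak m}(2)\mathcal H$; $\zeta^{\mathfrak a}(k)=0$ for even $k$. Grading on $\mathcal M^{(1)}((T))$: $\zeta^{\mathfrak a}(k)$ degree $k$, $T$ degree $0$; for $r\in\mathbb Q^\times$, $r\circ$ is the continuous $\mathbb Q((T))$-algebra automorphism $\zeta^{\mathfrak a}(k)\mapsto r^k\zeta^{\mathfrak a}(k)$; degree-$0$ part = set all $\zeta^{\mathfrak a}(k)=0$. $H^{\mathfrak a}(n)=(-1)^n\sum_{k\ge1}\binom{n+k-1}{n-1}\zeta^{\mathfrak a}(n+k)T^k$; $H^{\mathfrak a}(1^0)=1$, $H^{\mathfrak a}(1^n)=\frac1n\sum_{i=1}^n(-1)^{i-1}H^{\mathfrak a}(i)H^{\mathfrak a}(1^{n-i})$; $c_n^{\mathfrak a}=n\sum_{j\ge0}(n-1)^jT^jH^{\mathfrak a}(1^j)$ for $n\ge1$ (invertible in $\mathcal M^{(1)}[[T]]$). $\mathbb Q_{p\to\infty}=\{(a_p)\in\prod_p\mathbb Q_p: v_p(a_p)\text{ bounded below}\}/\{(a_p): v_p(a_p)\to\infty\}$ with filtration $\mathrm{Fil}^n=\{\liminf v_p(a_p)\ge n\}$. $\zeta_p(k)$ are depth-one $p$-adic multiple zeta values (rescaled by a power of $p$) with $\zeta_p(k)=0$ for even $k$, $\zeta_p(k)\in\mathbb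 Z_p$ for $p>k$, and $\sum_{j=1}^{p-1}j^{-n}=(-1)^n\sum_{k\ge1}\binom{n+k-1}{n-1}p^k\zeta_p(n+k)$. $\widehat{per}:\mathcal M^{(1)}((T))\to\mathbb Q_{p\to\infty}$ is the continuous ring homomorphism with $\zeta^{\mathfrak a}(k)\mapsto(\zeta_p(k))_p$, $T\mapsto(p)_p$. *)

theory Defs
  imports "HOL-Computational_Algebra.Formal_Power_Series" "HOL-Library.Poly_Mapping"
          "HOL-Computational_Algebra.Primes"
begin

definition pge :: "nat \<Rightarrow> int \<Rightarrow> rat \<Rightarrow> bool" where
  "pge p N x \<longleftrightarrow> (\<exists>a b::int. b \<noteq> 0 \<and> \<not> int p dvd b \<and>
      x = (of_nat p) powi N * of_int a / of_int b)"

text \<open>Elements of Q_p (completion of Q) are represented by p-adically Cauchy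
  sequences of rationals.\<close>
definition padic_cauchy :: "nat \<Rightarrow> (nat \<Rightarrow> rat) \<Rightarrow> bool" where
  "padic_cauchy p x \<longleftrightarrow> (\<forall>N::int. \<exists>M0. \<forall>m\<ge>M0. \<forall>m'\<ge>M0. pge p N (x m - x m'))"

text \<open>padic_lim_ge p x N : the p-adic limit of the Cauchy sequence x has
  valuation at least N.\<close>
definition padic_lim_ge :: "nat \<Rightarrow> (nat \<Rightarrow> rat) \<Rightarrow> int \<Rightarrow> bool" where
  "padic_lim_ge p x N \<longleftrightarrow> (\<exists>M0. \<forall>M\<ge>M0. pge p N (x M))"

text \<open>Polynomials over Q in the variables x_0, x_1, ...; M^(1) is the subalgebra
  generated by x_k (odd k >= 3), x_k standing for zeta^a(k).\<close>
type_synonym mpoly = "(nat \<Rightarrow>\<^sub>0 nat) \<Rightarrow>\<^sub>0 rat"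

definition mconst :: "rat \<Rightarrow> mpoly" where
  "mconst q = Poly_Mapping.single 0 q"

definition zeta_a :: "nat \<Rightarrow> mpoly" where
  "zeta_a k = (if odd k \<and> 3 \<le> k then Poly_Mapping.single (Poly_Mapping.single k 1) 1 else 0)"

definition mweight :: "(nat \<Rightarrow>\<^sub>0 nat) \<Rightarrow> nat" where
  "mweight \<mu> = (\<Sum>k\<in>Poly_Mapping.keys \<mu>. k * Poly_Mapping.lookup \<mu> k)"

text \<open>r o : zeta^a(k) maps to r^k zeta^a(k), extended coefficientwise in T.\<close>
definition rcirc :: "rat \<Rightarrow> mpoly fps \<Rightarrow> mpoly fps" where
  "rcirc r f = Abs_fps (\<lambda>m. Poly_Mapping.mapp (\<lambda>\<mu> c. r ^ mweight \<mu> * c) (fps_nth f m))"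

text \<open>Degree-0 part: set all zeta^a(k) to 0.\<close>
definition deg0 :: "mpoly fps \<Rightarrow> mpoly fps" where
  "deg0 f = Abs_fps (\<lambda>m. mconst (Poly_Mapping.lookup (fps_nth f m) 0))"

definition Ha :: "nat \<Rightarrow> mpoly fps" where
  "Ha n = Abs_fps (\<lambda>k. if k = 0 then 0 else
      (-1) ^ n * of_nat ((n + k - 1) choose (n - 1)) * zeta_a (n + k))"

text \<open>H^a(1^n), with the sum index shifted by one (i = j+1).\<close>
fun Ha1 :: "nat \<Rightarrow> mpoly fps" where
  "Ha1 0 = 1"
| "Ha1 (Suc m) = fps_const (mconst (1 / of_nat (Suc m))) *
     (\<Sum>j<Suc m. (-1) ^ j * Ha (Suc j) * Ha1 (m - j))"

text \<open>c^a_n = n * sum_j (n-1)^j T^j H^a(1^j); coefficient of T^m written out.\<close>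
definition ca :: "nat \<Rightarrow> mpoly fps" where
  "ca n = Abs_fps (\<lambda>m. of_nat n * (\<Sum>j\<le>m. of_nat ((n - 1) ^ j) * fps_nth (Ha1 j) (m - j)))"

definition zinv :: "'a::comm_ring_1 \<Rightarrow> 'a" where
  "zinv x = (THE y. x * y = 1)"

definition zpow :: "'a::comm_ring_1 \<Rightarrow> int \<Rightarrow> 'a" where
  "zpow x n = (if 0 \<le> n then x ^ nat n else zinv x ^ nat (- n))"

definition alpha_a :: "nat \<Rightarrow> (nat \<Rightarrow> nat) \<Rightarrow> (nat \<Rightarrow> int) \<Rightarrow> mpoly fps" where
  "alpha_a K b n = (\<Prod>i<K. zpow (\<Prod>m\<in>{1..b i}. ca m) (n i))"

definition mev :: "(nat \<Rightarrow> rat) \<Rightarrow> mpoly \<Rightarrow> rat" where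
  "mev z P = (\<Sum>\<mu>\<in>Poly_Mapping.keys P. Poly_Mapping.lookup P \<mu> * (\<Prod>k\<in>Poly_Mapping.keys \<mu>. z k ^ Poly_Mapping.lookup \<mu> k))"

text \<open>zeta p k M : M-th rational approximation of zeta_p(k) in Q_p.
  per_eq zeta f c : the element per(f) of Q_{p->infinity} equals the class of
  (c p)_p. By continuity of per (zeta^a(k) -> (zeta_p(k))_p, T -> (p)_p) this
  means: for every N, for all sufficiently large primes p,
  v_p( sum_{k<N} ev_p(f_k) p^k - c p ) >= N.\<close>
definition per_eq :: "(nat \<Rightarrow> nat \<Rightarrow> nat \<Rightarrow> rat) \<Rightarrow> mpoly fps \<Rightarrow> (nat \<Rightarrow> rat) \<Rightarrow> bool" where
  "per_eq zeta f c \<longleftrightarrow> (\<forall>N::nat. \<forall>\<^sub>F p in sequentially. prime p \<longrightarrow>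
     padic_lim_ge p (\<lambda>M. (\<Sum>k<N. mev (\<lambda>j. zeta p j M) (fps_nth f k) * of_nat p ^ k) - c p) (int N))"

definition padic_zeta_data :: "(nat \<Rightarrow> nat \<Rightarrow> nat \<Rightarrow> rat) \<Rightarrow> bool" where
  "padic_zeta_data zeta \<longleftrightarrow>
     (\<forall>p. prime p \<longrightarrow>
        (\<forall>k. padic_cauchy p (zeta p k))
      \<and> (\<forall>k. even k \<longrightarrow> (\<forall>N. padic_lim_ge p (zeta p k) N))
      \<and> (\<forall>k. k < p \<longrightarrow> padic_lim_ge p (zeta p k) 0)
      \<and> (\<forall>n\<ge>1. \<forall>N::int. \<exists>K0. \<forall>K\<ge>K0. padic_lim_ge p
            (\<lambda>M. (\<Sum>j=1..p-1. (1 / of_nat j) ^ n) -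
                 (-1) ^ n * (\<Sum>k=1..K. of_nat ((n + k - 1) choose (n - 1)) *
                                      of_nat p ^ k * zeta p (n + k) M)) N))
   \<and> (\<forall>n\<ge>1. per_eq zeta (Ha n) (\<lambda>p. \<Sum>j=1..p-1. (1 / of_nat j) ^ n))"

end

theory Submission
  imports Defs
begin



definition mmono :: "(nat \<Rightarrow> rat) \<Rightarrow> (nat \<Rightarrow>\<^sub>0 nat) \<Rightarrow> rat" where
  "mmono z \<mu> = (\<Prod>k\<in>Poly_Mapping.keys \<mu>. z k ^ Poly_Mapping.lookup \<mu> k)"

lemma mono_superset:
  assumes "finite S" "Poly_Mapping.keys \<mu> \<subseteq> S"
  shows "mmono z \<mu> = (\<Prod>k\<in>S. z k ^ Poly_Mapping.lookup \<mu> k)"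
  unfolding mmono_def
  by (rule prod.mono_neutral_left) (use assms in \<open>auto simp: in_keys_iff\<close>)

lemma mono_add: "mmono z (\<mu> + \<nu>) = mmono z \<mu> * mmono z \<nu>"
proof -
  let ?S = "Poly_Mapping.keys \<mu> \<union> Poly_Mapping.keys \<nu>"
  have "mmono z (\<mu> + \<nu>) = (\<Prod>k\<in>?S. z k ^ Poly_Mapping.lookup (\<mu> + \<nu>) k)"
    by (rule mono_superset) (use keys_add[of \<mu> \<nu>] in auto)
  also have "\<dots> = (\<Prod>k\<in>?S. z k ^ Poly_Mapping.lookup \<mu> k) * (\<Prod>k\<in>?S. z k ^ Poly_Mapping.lookup \<nu> k)"
    by (simp add: lookup_add power_add prod.distrib)
  also have "\<dots> = mmono z \<mu> * mmono z \<nu>"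
    by (subst (1 2) mono_superset[of ?S]) auto
  finally show ?thesis .
qed

lemma mono_zero [simp]: "mmono z 0 = 1"
  by (simp add: mmono_def)

lemma mev_superset:
  assumes "finite S" "Poly_Mapping.keys P \<subseteq> S"
  shows "mev z P = (\<Sum>\<mu>\<in>S. Poly_Mapping.lookup P \<mu> * mmono z \<mu>)"
  unfolding mev_def mmono_def[symmetric]
  by (rule sum.mono_neutral_left) (use assms in \<open>auto simp: in_keys_iff\<close>)

lemma mev_add: "mev z (P + Q) = mev z P + mev z Q"
proof -
  let ?S = "Poly_Mapping.keys P \<union> Poly_Mapping.keys Q"
  have "mev z (P + Q) = (\<Sum>\<mu>\<in>?S. Poly_Mapping.lookup (P + Q) \<mu> * mmono z \<mu>)"
    by (rule mev_superset) (use keys_add[of P Q] in auto)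
  also have "\<dots> = (\<Sum>\<mu>\<in>?S. Poly_Mapping.lookup P \<mu> * mmono z \<mu>) + (\<Sum>\<mu>\<in>?S. Poly_Mapping.lookup Q \<mu> * mmono z \<mu>)"
    by (simp add: lookup_add distrib_right sum.distrib)
  also have "\<dots> = mev z P + mev z Q"
    by (subst (1 2) mev_superset[of ?S]) auto
  finally show ?thesis .
qed

lemma mev_zero [simp]: "mev z 0 = 0"
  by (simp add: mev_def)

lemma mev_uminus: "mev z (- P) = - mev z P"
  by (simp add: mev_def lookup_uminus sum_negf)

lemma mev_diff: "mev z (P - Q) = mev z P - mev z Q"
  using mev_add[of z P "-Q"] by (simp add: mev_uminus)

lemma mev_sum: "mev z (sum f A) = (\<Sum>a\<in>A. mev z (f a))"
  by (induction A rule: infinite_finite_induct) (auto simp: mev_add)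

lemma mev_single: "mev z (Poly_Mapping.single \<mu> c) = c * mmono z \<mu>"
  by (simp add: mev_def mmono_def)

lemma pm_decomp: "P = (\<Sum>\<mu>\<in>Poly_Mapping.keys P. Poly_Mapping.single \<mu> (Poly_Mapping.lookup P \<mu>))"
  by (rule poly_mapping_eqI) (auto simp: lookup_sum lookup_single when_def in_keys_iff
        intro: sum.neutral[symmetric] elim: sum.remove)

lemma mev_mult: "mev z (P * Q) = mev z P * mev z Q"
proof -
  let ?s = "\<lambda>R \<mu>. Poly_Mapping.single \<mu> (Poly_Mapping.lookup R \<mu>)"
  have "P * Q = (\<Sum>\<mu>\<in>Poly_Mapping.keys P. ?s P \<mu>) * (\<Sum>\<nu>\<in>Poly_Mapping.keys Q. ?s Q \<nu>)"
    by (subst (1) pm_decomp[of P], subst (1) pm_decomp[of Q]) (rule refl)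
  also have "\<dots> = (\<Sum>\<mu>\<in>Poly_Mapping.keys P. \<Sum>\<nu>\<in>Poly_Mapping.keys Q. ?s P \<mu> * ?s Q \<nu>)"
    by (simp add: sum_product)
  finally have "mev z (P * Q) = (\<Sum>\<mu>\<in>Poly_Mapping.keys P. \<Sum>\<nu>\<in>Poly_Mapping.keys Q. mev z (?s P \<mu> * ?s Q \<nu>))"
    by (simp add: mev_sum)
  also have "\<dots> = (\<Sum>\<mu>\<in>Poly_Mapping.keys P. \<Sum>\<nu>\<in>Poly_Mapping.keys Q. mev z (?s P \<mu>) * mev z (?s Q \<nu>))"
    by (simp add: mult_single mev_single mono_add ac_simps)
  also have "\<dots> = mev z P * mev z Q"
    by (simp add: sum_product[symmetric] mev_sum[symmetric] pm_decomp[symmetric])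
  finally show ?thesis .
qed

lemma mev_one [simp]: "mev z 1 = 1"
  using mev_single[of z 0 1] by simp

lemma mev_mconst [simp]: "mev z (mconst q) = q"
  by (simp add: mconst_def mev_single)

lemma mconst_add: "mconst (a + b) = mconst a + mconst b"
  by (simp add: mconst_def single_add)
lemma mconst_mult: "mconst (a * b) = mconst a * mconst b"
  by (simp add: mconst_def mult_single)
lemma mconst_one [simp]: "mconst 1 = 1"
  by (simp add: mconst_def)
lemma mconst_zero [simp]: "mconst 0 = 0"
  by (simp add: mconst_def)

lemma mev_zeta_a: "mev z (zeta_a k) = (if odd k \<and> 3 \<le> k then z k else 0)"
  by (simp add: zeta_a_def mev_single mmono_def)

lemma mev_of_nat [simp]: "mev z (of_nat n) = of_nat n"
  by (induction n) (simp_all add: mev_add)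

lemma mev_of_int [simp]: "mev z (of_int n) = of_int n"
  by (cases n rule: int_cases) (simp_all add: mev_uminus mev_diff)

lemma mev_power: "mev z (P ^ n) = mev z P ^ n"
  by (induction n) (simp_all add: mev_mult)

lemma mev_prod: "mev z (prod f A) = (\<Prod>a\<in>A. mev z (f a))"
  by (induction A rule: infinite_finite_induct) (auto simp: mev_mult)




definition pg :: "nat \<Rightarrow> nat \<Rightarrow> rat \<Rightarrow> bool" where
  "pg p N x \<longleftrightarrow> pge p (int N) x"

lemma pg_def': "pg p N x \<longleftrightarrow> (\<exists>a b::int. b \<noteq> 0 \<and> \<not> int p dvd b \<and> x = of_nat p ^ N * of_int a / of_int b)"
  by (simp add: pg_def pge_def)

lemma pgI: "b \<noteq> 0 \<Longrightarrow> \<not> int p dvd b \<Longrightarrow> x = of_nat p ^ N * of_int a / of_int b \<Longrightarrow> pg p N x"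
  unfolding pg_def' by blast

context fixes p :: nat assumes pp: "prime p" begin

lemma p_ne1: "\<not> int p dvd 1"
  using pp by (metis int_dvd_int_iff nat_dvd_1_iff_1 not_prime_1 of_nat_1)

lemma p_not1 [simp]: "p \<noteq> Suc 0"
  using pp by auto

lemma pg_zero [simp]: "pg p N 0"
  by (rule pgI[of 1 _ _ _ 0]) (auto simp: p_ne1)

lemma not_dvd_mult: "\<not> int p dvd b \<Longrightarrow> \<not> int p dvd d \<Longrightarrow> \<not> int p dvd (b * d)"
  using pp by (metis prime_dvd_mult_iff prime_nat_int_transfer)

lemma pg_add: "pg p N x \<Longrightarrow> pg p N y \<Longrightarrow> pg p N (x + y)"
  unfolding pg_def'
proof (elim exE conjE)
  fix a b c d :: int
  assume h: "b \<noteq> 0" "\<not> int p dvd b" "x = of_nat p ^ N * of_int a / of_int b"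
     "d \<noteq> 0" "\<not> int p dvd d" "y = of_nat p ^ N * of_int c / of_int d"
  have "x + y = of_nat p ^ N * of_int (a*d + c*b) / of_int (b*d)"
    using h(1,4) by (simp add: h(3,6) field_simps)
  then show "\<exists>a b::int. b \<noteq> 0 \<and> \<not> int p dvd b \<and> x + y = of_nat p ^ N * of_int a / of_int b"
    using h not_dvd_mult by (intro exI[of _ "a*d + c*b"] exI[of _ "b*d"]) simp
qed

lemma pg_uminus: "pg p N x \<Longrightarrow> pg p N (- x)"
  unfolding pg_def'
proof (elim exE conjE)
  fix a b :: int
  assume h: "b \<noteq> 0" "\<not> int p dvd b" "x = of_nat p ^ N * of_int a / of_int b"
  show "\<exists>a b::int. b \<noteq> 0 \<and> \<not> int p dvd b \<and> - x = of_nat p ^ N * of_int a / of_int b"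
    by (intro exI[of _ "-a"] exI[of _ b]) (simp add: h)
qed

lemma pg_diff: "pg p N x \<Longrightarrow> pg p N y \<Longrightarrow> pg p N (x - y)"
  using pg_add[of N x "-y"] pg_uminus by simp

lemma pg_mult: "pg p N x \<Longrightarrow> pg p N' y \<Longrightarrow> pg p (N + N') (x * y)"
  unfolding pg_def'
proof (elim exE conjE)
  fix a b c d :: int
  assume h: "b \<noteq> 0" "\<not> int p dvd b" "x = of_nat p ^ N * of_int a / of_int b"
     "d \<noteq> 0" "\<not> int p dvd d" "y = of_nat p ^ N' * of_int c / of_int d"
  have "x * y = of_nat p ^ (N + N') * of_int (a*c) / of_int (b*d)"
    using h(1,4) by (simp add: h(3,6) power_add)
  then show "\<exists>a b::int. b \<noteq> 0 \<and> \<not> int p dvd b \<and> x * y = of_nat p ^ (N + N') * of_int a / of_int b"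
    using h not_dvd_mult by (intro exI[of _ "a*c"] exI[of _ "b*d"]) simp
qed

lemma pg_mono: "N' \<le> N \<Longrightarrow> pg p N x \<Longrightarrow> pg p N' x"
  unfolding pg_def'
proof (elim exE conjE)
  fix a b :: int
  assume h: "N' \<le> N" "b \<noteq> 0" "\<not> int p dvd b" "x = of_nat p ^ N * of_int a / of_int b"
  have e: "(of_nat p :: rat) ^ N = of_nat p ^ N' * of_nat p ^ (N - N')"
    using h(1) by (simp add: power_add[symmetric])
  have "x = of_nat p ^ N' * of_int (int p ^ (N - N') * a) / of_int b"
    by (simp add: h(4) e)
  then show "\<exists>a b::int. b \<noteq> 0 \<and> \<not> int p dvd b \<and> x = of_nat p ^ N' * of_int a / of_int b"
    using h(2,3) by blast
qed

lemma pg_int [simp]: "pg p 0 (of_int a)"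
  by (rule pgI[of 1 _ _ _ a]) (auto simp: p_ne1)

lemma pg_nat [simp]: "pg p 0 (of_nat a)"
  using pg_int[of "int a"] by simp

lemma pg_one [simp]: "pg p 0 1"
  using pg_int[of 1] by simp

lemma pg_ppow: "pg p k (of_nat p ^ k)"
  by (rule pgI[of 1 _ _ _ 1]) (auto simp: p_ne1)

lemma pg_frac: "\<not> int p dvd b \<Longrightarrow> pg p 0 (of_int a / of_int b)"
proof -
  assume "\<not> int p dvd b"
  then have "b \<noteq> 0" by auto
  then show ?thesis by (rule pgI[of b _ _ _ a]) (use \<open>\<not> int p dvd b\<close> in auto)
qed

lemma pg_inv_nat: "\<not> p dvd j \<Longrightarrow> pg p 0 (1 / of_nat j)"
  using pg_frac[of "int j" 1] by (simp add: int_dvd_int_iff)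

lemma pg_shift: "pg p N x \<Longrightarrow> pg p (k + N) (of_nat p ^ k * x)"
  using pg_mult[OF pg_ppow] by blast


lemma pg_sum: "(\<And>a. a \<in> A \<Longrightarrow> pg p N (f a)) \<Longrightarrow> pg p N (sum f A)"
  by (induction A rule: infinite_finite_induct) (auto intro: pg_add)

lemma pg_mult0: "pg p 0 x \<Longrightarrow> pg p N y \<Longrightarrow> pg p N (x * y)"
  using pg_mult[of 0 x N y] by simp

lemma pg_prod: "(\<And>a. a \<in> A \<Longrightarrow> pg p 0 (f a)) \<Longrightarrow> pg p 0 (prod f A)"
  by (induction A rule: infinite_finite_induct) (auto intro: pg_mult0)

lemma pg_pow: "pg p 0 x \<Longrightarrow> pg p 0 (x ^ n)"
  by (induction n) (auto intro: pg_mult0)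

lemma pg_unit_inv: "pg p 0 e \<Longrightarrow> pg p 0 (1 / (1 + of_nat p * e))"
  unfolding pg_def'
proof (elim exE conjE)
  fix a b :: int
  assume h: "b \<noteq> 0" "\<not> int p dvd b" "e = of_nat p ^ 0 * of_int a / of_int b"
  have nd: "\<not> int p dvd (b + int p * a)"
    using h(2) by (metis dvd_add_left_iff dvd_triv_left)
  then have nz: "b + int p * a \<noteq> 0" by auto
  have "1 / (1 + of_nat p * e) = (of_int b / of_int (b + int p * a) :: rat)"
  proof -
    have nz': "(of_int (b + int p * a) :: rat) \<noteq> 0" using nz by (metis of_int_eq_0_iff)
    have "1 + of_nat p * e = (of_int (b + int p * a) :: rat) / of_int b"
      using h(1) by (simp add: h(3) field_simps)
    then show ?thesis by simp
  qed
  then show "\<exists>a' b'::int. b' \<noteq> 0 \<and> \<not> int p dvd b' \<and> 1 / (1 + of_nat p * e) = of_nat p ^ 0 * of_int a' / of_int b'"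
    using nd nz by (intro exI[of _ b] exI[of _ "b + int p * a"]) simp
qed

end

lemma rat_pg_large: "\<exists>B. \<forall>p\<ge>B. prime p \<longrightarrow> pg p 0 q"
proof -
  obtain a b where q: "quotient_of q = (a, b)" by (cases "quotient_of q")
  then have b: "b > 0" "q = of_int a / of_int b" using quotient_of_denom_pos quotient_of_div by blast+
  show ?thesis
  proof (intro exI[of _ "nat b + 1"] allI impI)
    fix p :: nat assume "p \<ge> nat b + 1" "prime p"
    have "\<not> int p dvd b"
    proof
      assume "int p dvd b"
      then have "int p \<le> b" using b(1) by (rule zdvd_imp_le)
      with \<open>p \<ge> nat b + 1\<close> show False by linarith
    qed
    then show "pg p 0 q" using pg_frac[OF \<open>prime p\<close>] b(2) by simp
  qed
qed

lemma finite_large: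
  fixes P :: "'a \<Rightarrow> nat \<Rightarrow> bool"
  assumes "finite A" "\<And>a. a \<in> A \<Longrightarrow> \<exists>B. \<forall>p\<ge>B. P a p"
  shows "\<exists>B. \<forall>p\<ge>B. \<forall>a\<in>A. P a p"
  using assms
proof (induction A rule: finite_induct)
  case empty then show ?case by auto
next
  case (insert x F)
  then obtain B1 where B1: "\<forall>p\<ge>B1. \<forall>a\<in>F. P a p" by auto
  moreover have "\<exists>B. \<forall>p\<ge>B. P x p" using insert.prems by auto
  then obtain B2 where B2: "\<forall>p\<ge>B2. P x p" by blast
  note B12 = B1 B2
  ultimately have "\<forall>p\<ge>max B1 B2. \<forall>a\<in>insert x F. P a p"
  proof (intro allI impI)
    fix p assume "max B1 B2 \<le> p"
    then have "B1 \<le> p" "B2 \<le> p" using max.cobounded1[of B1 B2] max.cobounded2[of B2 B1] by linarith+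
    then show "\<forall>a\<in>insert x F. P a p" using B12 by blast
  qed
  then show ?case by blast
qed




definition EV :: "nat \<Rightarrow> (nat \<Rightarrow> nat \<Rightarrow> rat) \<Rightarrow> bool" where
  "EV N X \<longleftrightarrow> (\<forall>\<^sub>F p in sequentially. prime p \<longrightarrow> (\<forall>\<^sub>F M in sequentially. pg p N (X p M)))"

lemma EV_combine:
  assumes "EV N1 X" "EV N2 Y"
    and "\<And>p M. prime p \<Longrightarrow> pg p N1 (X p M) \<Longrightarrow> pg p N2 (Y p M) \<Longrightarrow> pg p N3 (W p M)"
  shows "EV N3 W"
  using assms(1,2) unfolding EV_def
  by (rule eventually_elim2) (auto elim: eventually_elim2 intro: assms(3))

lemma EV_map:
  assumes "EV N1 X"
    and "\<And>p M. prime p \<Longrightarrow> pg p N1 (X p M) \<Longrightarrow> pg p N3 (W p M)"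
  shows "EV N3 W"
  using assms(1) unfolding EV_def
  by (rule eventually_mono) (auto elim: eventually_mono intro: assms(2))

lemma EV_triv: "(\<And>p M. prime p \<Longrightarrow> pg p N (X p M)) \<Longrightarrow> EV N X"
  unfolding EV_def by auto

lemma EV_add: "EV N X \<Longrightarrow> EV N Y \<Longrightarrow> EV N (\<lambda>p M. X p M + Y p M)"
  using EV_combine[of N X N Y N "\<lambda>p M. X p M + Y p M"] pg_add by blast
lemma EV_diff: "EV N X \<Longrightarrow> EV N Y \<Longrightarrow> EV N (\<lambda>p M. X p M - Y p M)"
  using EV_combine[of N X N Y N "\<lambda>p M. X p M - Y p M"] pg_diff by blast
lemma EV_mult: "EV N1 X \<Longrightarrow> EV N2 Y \<Longrightarrow> EV (N1 + N2) (\<lambda>p M. X p M * Y p M)"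
  using EV_combine[of N1 X N2 Y "N1 + N2" "\<lambda>p M. X p M * Y p M"] pg_mult by blast
lemma EV_mult0: "EV 0 X \<Longrightarrow> EV N Y \<Longrightarrow> EV N (\<lambda>p M. X p M * Y p M)"
  using EV_mult[of 0 X N Y] by simp
lemma EV_mono: "EV N X \<Longrightarrow> N' \<le> N \<Longrightarrow> EV N' X"
  using EV_map[of N X N' X] pg_mono by blast
lemma EV_zero: "EV N (\<lambda>p M. 0)"
  by (rule EV_triv) simp
lemma EV_ppow: "EV k (\<lambda>p M. of_nat p ^ k)"
  by (rule EV_triv) (simp add: pg_ppow)
lemma EV_shift: "EV N X \<Longrightarrow> EV (k + N) (\<lambda>p M. of_nat p ^ k * X p M)"
  using EV_mult[OF EV_ppow] by blast

lemma EV_const: "EV 0 (\<lambda>p M. q)"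
proof -
  obtain B where "\<forall>p\<ge>B. prime p \<longrightarrow> pg p 0 q" using rat_pg_large by blast
  then show ?thesis unfolding EV_def eventually_sequentially by auto
qed

lemma EV_sum: "(\<And>i. i \<in> A \<Longrightarrow> EV N (X i)) \<Longrightarrow> EV N (\<lambda>p M. \<Sum>i\<in>A. X i p M)"
proof (induction A rule: infinite_finite_induct)
  case (infinite A) then show ?case by (simp add: EV_zero)
next
  case empty then show ?case by (simp add: EV_zero)
next
  case (insert x F) then show ?case by (simp add: EV_add)
qed

lemma EV_prod: "(\<And>i. i \<in> A \<Longrightarrow> EV 0 (X i)) \<Longrightarrow> EV 0 (\<lambda>p M. \<Prod>i\<in>A. X i p M)"
proof (induction A rule: infinite_finite_induct)
  case (infinite A) then show ?case by (simp add: EV_const)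
next
  case empty then show ?case by (simp add: EV_const)
next
  case (insert x F) then show ?case by (simp add: EV_mult0)
qed

lemma EV_pow: "EV 0 X \<Longrightarrow> EV 0 (\<lambda>p M. X p M ^ k)"
  using EV_map[of 0 X 0 "\<lambda>p M. X p M ^ k"] pg_pow by blast

definition ZD :: "(nat \<Rightarrow> nat \<Rightarrow> nat \<Rightarrow> rat) \<Rightarrow> bool" where
  "ZD Z \<longleftrightarrow> (\<forall>j. EV 0 (\<lambda>p M. Z p j M))"

abbreviation ev :: "(nat \<Rightarrow> nat \<Rightarrow> nat \<Rightarrow> rat) \<Rightarrow> nat \<Rightarrow> nat \<Rightarrow> mpoly \<Rightarrow> rat" where
  "ev Z p M P \<equiv> mev (\<lambda>j. Z p j M) P"

lemma EV_ev: "ZD Z \<Longrightarrow> EV 0 (\<lambda>p M. ev Z p M P)"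
  unfolding mev_def
proof (rule EV_sum)
  fix \<mu> assume "ZD Z"
  have "EV 0 (\<lambda>p M. \<Prod>k\<in>Poly_Mapping.keys \<mu>. Z p k M ^ Poly_Mapping.lookup \<mu> k)"
    by (rule EV_prod, rule EV_pow) (use \<open>ZD Z\<close> in \<open>simp add: ZD_def\<close>)
  then show "EV 0 (\<lambda>p M. Poly_Mapping.lookup P \<mu> * (\<Prod>k\<in>Poly_Mapping.keys \<mu>. Z p k M ^ Poly_Mapping.lookup \<mu> k))"
    by (rule EV_mult0[OF EV_const])
qed

definition tr :: "(nat \<Rightarrow> nat \<Rightarrow> nat \<Rightarrow> rat) \<Rightarrow> nat \<Rightarrow> nat \<Rightarrow> nat \<Rightarrow> mpoly fps \<Rightarrow> rat" where
  "tr Z p M N f = (\<Sum>k<N. ev Z p M (fps_nth f k) * of_nat p ^ k)"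

lemma per_eq_EV: "per_eq Z f c \<longleftrightarrow> (\<forall>N. EV N (\<lambda>p M. tr Z p M N f - c p))"
  unfolding per_eq_def EV_def tr_def padic_lim_ge_def pg_def eventually_sequentially ..

lemma EV_tr: "ZD Z \<Longrightarrow> EV 0 (\<lambda>p M. tr Z p M N f)"
  unfolding tr_def
proof (rule EV_sum)
  fix k assume "ZD Z"
  show "EV 0 (\<lambda>p M. ev Z p M (fps_nth f k) * of_nat p ^ k)"
    by (rule EV_mult0[OF EV_ev[OF \<open>ZD Z\<close>]]) (rule EV_mono[OF EV_ppow], simp)
qed

lemma tr_add: "tr Z p M N (f + g) = tr Z p M N f + tr Z p M N g"
  by (simp add: tr_def mev_add distrib_right sum.distrib)
lemma tr_uminus: "tr Z p M N (- f) = - tr Z p M N f"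
  by (simp add: tr_def mev_uminus sum_negf)
lemma tr_diff: "tr Z p M N (f - g) = tr Z p M N f - tr Z p M N g"
  by (simp add: tr_def mev_diff left_diff_distrib sum_subtractf)
lemma tr_zero [simp]: "tr Z p M N 0 = 0"
  by (simp add: tr_def)

lemma tr_sum: "tr Z p M N (sum f A) = (\<Sum>a\<in>A. tr Z p M N (f a))"
  by (induction A rule: infinite_finite_induct) (simp_all add: tr_add)

lemma tr_const: "tr Z p M N (fps_const (mconst q)) = (if N = 0 then 0 else q)"
  by (cases N) (auto simp: tr_def lessThan_Suc_eq_insert_0 zero_notin_Suc_image intro!: sum.neutral)

lemma per_add: "per_eq Z f c \<Longrightarrow> per_eq Z g d \<Longrightarrow> per_eq Z (f + g) (\<lambda>p. c p + d p)"
  unfolding per_eq_EV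
proof
  fix N assume "\<forall>N. EV N (\<lambda>p M. tr Z p M N f - c p)" "\<forall>N. EV N (\<lambda>p M. tr Z p M N g - d p)"
  then have "EV N (\<lambda>p M. (tr Z p M N f - c p) + (tr Z p M N g - d p))"
    by (intro EV_add[of N "\<lambda>p M. tr Z p M N f - c p" "\<lambda>p M. tr Z p M N g - d p"]) auto
  then show "EV N (\<lambda>p M. tr Z p M N (f + g) - (c p + d p))"
    by (simp add: tr_add algebra_simps)
qed

lemma per_diff: "per_eq Z f c \<Longrightarrow> per_eq Z g d \<Longrightarrow> per_eq Z (f - g) (\<lambda>p. c p - d p)"
  unfolding per_eq_EV
proof
  fix N assume "\<forall>N. EV N (\<lambda>p M. tr Z p M N f - c p)" "\<forall>N. EV N (\<lambda>p M. tr Z p M N g - d p)"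
  then have "EV N (\<lambda>p M. (tr Z p M N f - c p) - (tr Z p M N g - d p))"
    by (intro EV_diff[of N "\<lambda>p M. tr Z p M N f - c p" "\<lambda>p M. tr Z p M N g - d p"]) auto
  then show "EV N (\<lambda>p M. tr Z p M N (f - g) - (c p - d p))"
    by (simp add: tr_diff algebra_simps)
qed

lemma per_sum: "(\<And>i. i \<in> A \<Longrightarrow> per_eq Z (f i) (c i)) \<Longrightarrow> per_eq Z (sum f A) (\<lambda>p. \<Sum>i\<in>A. c i p)"
proof (induction A rule: infinite_finite_induct)
  case (infinite A)
  then show ?case by (simp add: per_eq_EV tr_def EV_zero)
next
  case empty
  then show ?case by (simp add: per_eq_EV tr_def EV_zero)
next
  case (insert x F)
  then show ?case by (simp add: per_add)
qed

lemma per_const: "per_eq Z (fps_const (mconst q)) (\<lambda>p. q)"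
  unfolding per_eq_EV
proof
  fix N show "EV N (\<lambda>p M. tr Z p M N (fps_const (mconst q)) - q)"
  proof (cases "N = 0")
    case True then show ?thesis
      using EV_diff[OF EV_zero[of 0] EV_const[of q]] by (simp add: tr_const)
  qed (simp add: tr_const EV_zero)
qed

lemma tr_split: "N \<le> N' \<Longrightarrow> tr Z p M N' f = tr Z p M N f + (\<Sum>k\<in>{N..<N'}. ev Z p M (fps_nth f k) * of_nat p ^ k)"
proof -
  assume "N \<le> N'"
  then show ?thesis unfolding tr_def lessThan_atLeast0
    by (simp add: sum.atLeastLessThan_concat)
qed

lemma EV_tail: "ZD Z \<Longrightarrow> EV N (\<lambda>p M. \<Sum>k\<in>{N..<N'}. ev Z p M (fps_nth f k) * of_nat p ^ k)"
proof (rule EV_sum)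
  fix k assume z: "ZD Z" and k: "k \<in> {N..<N'}"
  have "EV (k + 0) (\<lambda>p M. of_nat p ^ k * ev Z p M (fps_nth f k))"
    by (rule EV_shift[OF EV_ev[OF z]])
  then have "EV N (\<lambda>p M. of_nat p ^ k * ev Z p M (fps_nth f k))"
    by (rule EV_mono) (use k in simp)
  then show "EV N (\<lambda>p M. ev Z p M (fps_nth f k) * of_nat p ^ k)"
    by (simp only: mult.commute)
qed

lemma EV_lower:
  assumes "ZD Z" "EV N' (\<lambda>p M. tr Z p M N' f - c p)" "N \<le> N'"
  shows "EV N (\<lambda>p M. tr Z p M N f - c p)"
proof -
  have "EV N (\<lambda>p M. (tr Z p M N' f - c p) - (\<Sum>k\<in>{N..<N'}. ev Z p M (fps_nth f k) * of_nat p ^ k))"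
    by (rule EV_diff[OF EV_mono[OF assms(2) assms(3)] EV_tail[OF assms(1)]])
  then show ?thesis by (simp add: tr_split[OF assms(3)])
qed




lemma tr_mult_expand:
  "tr Z p M N (f * g) = (\<Sum>(i,j)\<in>{(i,j). i+j < N}. ev Z p M (fps_nth f i) * ev Z p M (fps_nth g j) * of_nat p ^ (i + j))"
proof -
  have "tr Z p M N (f * g) = (\<Sum>k<N. \<Sum>i\<le>k. ev Z p M (fps_nth f i) * ev Z p M (fps_nth g (k - i)) * of_nat p ^ (i + (k - i)))"
    unfolding tr_def fps_mult_nth atLeast0AtMost mev_sum
    by (intro sum.cong refl) (simp add: sum_distrib_right mev_mult)
  also have "\<dots> = (\<Sum>(i,j)\<in>{(i,j). i+j < N}. ev Z p M (fps_nth f i) * ev Z p M (fps_nth g j) * of_nat p ^ (i + j))"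
    by (rule sum.triangle_reindex[symmetric])
  finally show ?thesis .
qed

lemma tr_mult_decomp:
  "tr Z p M N f * tr Z p M N g = tr Z p M N (f * g) +
     (\<Sum>(i,j)\<in>({..<N} \<times> {..<N}) - {(i,j). i+j < N}. ev Z p M (fps_nth f i) * ev Z p M (fps_nth g j) * of_nat p ^ (i + j))"
proof -
  let ?h = "\<lambda>(i,j). ev Z p M (fps_nth f i) * ev Z p M (fps_nth g j) * of_nat p ^ (i + j)"
  have sub: "{(i,j). i+j < N} \<subseteq> {..<N} \<times> {..<N}" by auto
  have "tr Z p M N f * tr Z p M N g = (\<Sum>i<N. \<Sum>j<N. ?h (i,j))"
    unfolding tr_def sum_product by (intro sum.cong refl) (simp add: power_add ac_simps)
  also have "\<dots> = sum ?h ({..<N} \<times> {..<N})"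
    by (simp add: sum.cartesian_product)
  also have "\<dots> = sum ?h ({..<N} \<times> {..<N} - {(i,j). i+j < N}) + sum ?h {(i,j). i+j < N}"
    by (rule sum.subset_diff[OF sub]) simp
  finally show ?thesis by (simp add: tr_mult_expand)
qed

lemma EV_decomp_tail:
  assumes "ZD Z"
  shows "EV N (\<lambda>p M. \<Sum>(i,j)\<in>({..<N} \<times> {..<N}) - {(i,j). i+j < N}. ev Z p M (fps_nth f i) * ev Z p M (fps_nth g j) * of_nat p ^ (i + j))"
proof (rule EV_sum)
  fix x assume x: "x \<in> {..<N} \<times> {..<N} - {(i, j). i + j < N}"
  obtain i j where ij: "x = (i,j)" by (cases x)
  have "EV ((i + j) + 0) (\<lambda>p M. of_nat p ^ (i + j) * (ev Z p M (fps_nth f i) * ev Z p M (fps_nth g j)))"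
    by (rule EV_shift, rule EV_mult0[OF EV_ev[OF assms] EV_ev[OF assms]])
  then have "EV N (\<lambda>p M. of_nat p ^ (i + j) * (ev Z p M (fps_nth f i) * ev Z p M (fps_nth g j)))"
    by (rule EV_mono) (use x ij in auto)
  then show "EV N (\<lambda>p M. case x of (i, j) \<Rightarrow> ev Z p M (fps_nth f i) * ev Z p M (fps_nth g j) * of_nat p ^ (i + j))"
    by (simp add: ij ac_simps)
qed

lemma per_const_int:
  assumes "ZD Z" "per_eq Z f c"
  shows "EV 0 (\<lambda>p M. c p)"
proof -
  have "EV 0 (\<lambda>p M. tr Z p M 0 f - (tr Z p M 0 f - c p))"
    using EV_diff[OF EV_tr[OF assms(1), of 0 f] spec[OF assms(2)[unfolded per_eq_EV], of 0]] .
  then show ?thesis by simp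
qed

lemma per_mult:
  assumes z: "ZD Z" and f: "per_eq Z f c" and g: "per_eq Z g d"
  shows "per_eq Z (f * g) (\<lambda>p. c p * d p)"
  unfolding per_eq_EV
proof
  fix N
  let ?E = "\<lambda>p M. \<Sum>(i,j)\<in>({..<N} \<times> {..<N}) - {(i,j). i+j < N}. ev Z p M (fps_nth f i) * ev Z p M (fps_nth g j) * of_nat p ^ (i + j)"
  have f': "EV N (\<lambda>p M. tr Z p M N f - c p)" and g': "EV N (\<lambda>p M. tr Z p M N g - d p)"
    using f g unfolding per_eq_EV by auto
  have "EV N (\<lambda>p M. (tr Z p M N f - c p) * tr Z p M N g)"
    using EV_mult[OF f' EV_tr[OF z, of N g]] by simp
  moreover have "EV N (\<lambda>p M. c p * (tr Z p M N g - d p))"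
    by (rule EV_mult0[OF per_const_int[OF z f] g'])
  ultimately have "EV N (\<lambda>p M. ((tr Z p M N f - c p) * tr Z p M N g + c p * (tr Z p M N g - d p)) - ?E p M)"
    by (intro EV_diff[OF EV_add EV_decomp_tail[OF z]])
  moreover have "\<And>p M. ((tr Z p M N f - c p) * tr Z p M N g + c p * (tr Z p M N g - d p)) - ?E p M
      = tr Z p M N (f * g) - c p * d p"
    using tr_mult_decomp[of Z _ _ N f g] by (simp add: algebra_simps)
  ultimately show "EV N (\<lambda>p M. tr Z p M N (f * g) - c p * d p)" by simp
qed

lemma per_one: "per_eq Z 1 (\<lambda>p. 1)"
  using per_const[of Z 1] by (simp add: fps_const_1_eq_1[symmetric] del: fps_const_1_eq_1)

lemma per_prod:
  assumes "ZD Z" "\<And>i. i \<in> A \<Longrightarrow> per_eq Z (f i) (c i)"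
  shows "per_eq Z (prod f A) (\<lambda>p. \<Prod>i\<in>A. c i p)"
  using assms(2)
proof (induction A rule: infinite_finite_induct)
  case (infinite A) then show ?case using per_one by simp
next
  case empty then show ?case using per_one by simp
next
  case (insert x F) then show ?case using per_mult[OF assms(1)] by simp
qed

lemma per_pow:
  assumes "ZD Z" "per_eq Z f c"
  shows "per_eq Z (f ^ k) (\<lambda>p. c p ^ k)"
  using per_prod[OF assms(1), of "{..<k}" "\<lambda>_. f" "\<lambda>_. c"] assms(2) by simp

lemma pg_Suc_split:
  assumes "pg p (Suc N) x"
  shows "\<exists>e. x = of_nat p * e \<and> pg p N e"
proof -
  obtain a b :: int where h: "b \<noteq> 0" "\<not> int p dvd b" "x = of_nat p ^ Suc N * of_int a / of_int b"
    using assms unfolding pg_def' by blast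
  show ?thesis
    by (rule exI[of _ "of_nat p ^ N * of_int a / of_int b"]) (use h in \<open>auto simp: pg_def'\<close>)
qed

lemma pg_not_one:
  assumes "prime p" shows "\<not> pg p (Suc N) 1"
proof
  assume "pg p (Suc N) 1"
  then obtain a b :: int where h: "b \<noteq> 0" "\<not> int p dvd b" "(1::rat) = of_nat p ^ Suc N * of_int a / of_int b"
    unfolding pg_def' by blast
  then have "(of_int b :: rat) = of_int (int p ^ Suc N * a)" by (simp add: field_simps)
  then have "b = int p ^ Suc N * a" by (simp only: of_int_eq_iff)
  then have "int p dvd b" by simp
  with h(2) show False ..
qed

lemma pg_inv_step:
  assumes pp: "prime p" and N: "1 \<le> N" and G: "pg p 0 G" and cG: "pg p N (c * G - 1)"
  shows "pg p N (G - 1 / c)"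
proof -
  have "pg p (Suc 0) (c * G - 1)" using pg_mono[OF pp _ cG] N by simp
  then obtain e where e: "c * G - 1 = of_nat p * e" "pg p 0 e" using pg_Suc_split by blast
  have ne: "1 + of_nat p * e \<noteq> 0"
  proof
    assume "1 + of_nat p * e = 0"
    then have "1 = - (of_nat p * e)" by (simp add: add_eq_0_iff)
    moreover have "pg p (Suc 0) (- (of_nat p * e))" using pg_uminus[OF pp pg_shift[OF pp e(2), of 1]] by simp
    ultimately show False using pg_not_one[OF pp, of 0] by simp
  qed
  have cG': "c * G = 1 + of_nat p * e" using e(1) by simp
  then have c0: "c \<noteq> 0" using ne by auto
  have "1 / c = G * (1 / (1 + of_nat p * e))"
    using c0 ne cG' by (simp add: field_simps)
  then have ic: "pg p 0 (1 / c)" using pg_mult0[OF pp G pg_unit_inv[OF pp e(2)]] by simp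
  have "G - 1 / c = (1 / c) * (c * G - 1)" using c0 by (simp add: field_simps)
  then show ?thesis using pg_mult0[OF pp ic cG] by simp
qed

lemma per_inv:
  assumes z: "ZD Z" and f: "per_eq Z f c" and fg: "f * g = 1"
  shows "per_eq Z g (\<lambda>p. 1 / c p)"
proof -
  have main: "EV N (\<lambda>p M. tr Z p M N g - 1 / c p)" if N: "1 \<le> N" for N
  proof -
    let ?E = "\<lambda>p M. \<Sum>(i,j)\<in>({..<N} \<times> {..<N}) - {(i,j). i+j < N}. ev Z p M (fps_nth f i) * ev Z p M (fps_nth g j) * of_nat p ^ (i + j)"
    have f': "EV N (\<lambda>p M. tr Z p M N f - c p)" using f unfolding per_eq_EV by auto
    have t1: "tr Z p M N (f * g) = 1" for p M
      using N by (simp add: fg tr_const[of Z p M N 1, simplified])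
    have "EV N (\<lambda>p M. ?E p M - (tr Z p M N f - c p) * tr Z p M N g)"
      using EV_diff[OF EV_decomp_tail[OF z, of N f g] EV_mult[OF f' EV_tr[OF z, of N g], simplified]] .
    moreover have "?E p M - (tr Z p M N f - c p) * tr Z p M N g = c p * tr Z p M N g - 1" for p M
      using tr_mult_decomp[of Z p M N f g] t1[of p M] by (simp add: algebra_simps)
    ultimately have cG: "EV N (\<lambda>p M. c p * tr Z p M N g - 1)" by simp
    show ?thesis
      by (rule EV_combine[OF EV_tr[OF z, of N g] cG]) (use pg_inv_step N in blast)
  qed
  show ?thesis unfolding per_eq_EV
  proof
    fix N show "EV N (\<lambda>p M. tr Z p M N g - 1 / c p)"
    proof (cases "N = 0")
      case True
      then show ?thesis using EV_lower[OF z main[of 1]] by simp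
    qed (use main in simp)
  qed
qed

lemma zinv_eq: "(x::'a::comm_ring_1) * y = 1 \<Longrightarrow> zinv x = y"
  unfolding zinv_def
proof (rule the_equality)
  fix y' assume "x * y = 1" "x * y' = 1"
  then show "y' = y" by (metis mult.assoc mult.commute mult.right_neutral)
qed

lemma per_zpow:
  assumes z: "ZD Z" and f: "per_eq Z f c" and fg: "f * g = 1"
  shows "per_eq Z (zpow f k) (\<lambda>p. c p powi k)"
proof (cases "0 \<le> k")
  case True
  then show ?thesis using per_pow[OF z f, of "nat k"] by (simp add: zpow_def power_int_def)
next
  case False
  have "per_eq Z (g ^ nat (- k)) (\<lambda>p. (1 / c p) ^ nat (- k))"
    by (rule per_pow[OF z per_inv[OF z f fg]])
  then show ?thesis using False by (simp add: zpow_def power_int_def zinv_eq[OF fg] divide_inverse)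
qed




unbundle fps_syntax

definition EP :: "nat set \<Rightarrow> (nat \<Rightarrow> rat) \<Rightarrow> rat fps" where
  "EP J y = (\<Prod>i\<in>J. 1 + fps_const (y i) * fps_X)"

definition esym :: "nat set \<Rightarrow> (nat \<Rightarrow> rat) \<Rightarrow> nat \<Rightarrow> rat" where
  "esym J y k = fps_nth (EP J y) k"

definition Gy :: "rat \<Rightarrow> rat fps" where
  "Gy c = Abs_fps (\<lambda>i. if i = 0 then 0 else (-1) ^ (i - 1) * c ^ i)"

lemma Gy_mult: "Gy c * (1 + fps_const c * fps_X) = fps_const c * fps_X"
proof (rule fps_ext)
  fix m
  show "(Gy c * (1 + fps_const c * fps_X)) $ m = (fps_const c * fps_X) $ m"
  proof (cases m)
    case 0 then show ?thesis by (simp add: Gy_def)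
  next
    case (Suc k)
    have "(Gy c * (1 + fps_const c * fps_X)) $ m = Gy c $ m + c * Gy c $ k"
      using Suc by (simp add: distrib_left mult.assoc[symmetric] mult.commute[of _ "fps_const c"])
    also have "\<dots> = (fps_const c * fps_X) $ m"
      using Suc by (cases k) (auto simp: Gy_def)
    finally show ?thesis .
  qed
qed

lemma EP_deriv:
  assumes "finite J"
  shows "fps_X * fps_deriv (EP J y) = (\<Sum>i\<in>J. Gy (y i)) * EP J y"
  using assms unfolding EP_def
proof (induction J rule: finite_induct)
  case empty then show ?case by simp
next
  case (insert x F)
  let ?P = "\<Prod>i\<in>F. 1 + fps_const (y i) * fps_X"
  let ?Q = "\<Sum>i\<in>F. Gy (y i)"
  have "fps_X * fps_deriv (?P * (1 + fps_const (y x) * fps_X))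
      = (fps_X * fps_deriv ?P) * (1 + fps_const (y x) * fps_X) + ?P * (fps_const (y x) * fps_X)"
    by (simp add: algebra_simps)
  also have "\<dots> = ?Q * ?P * (1 + fps_const (y x) * fps_X) + ?P * (Gy (y x) * (1 + fps_const (y x) * fps_X))"
    by (simp only: insert.IH Gy_mult)
  also have "\<dots> = (?Q + Gy (y x)) * (?P * (1 + fps_const (y x) * fps_X))"
    by (simp add: algebra_simps)
  finally show ?case using insert.hyps by (simp add: ac_simps)
qed

lemma Gy_sum_nth: "(\<Sum>i\<in>J. Gy (y i)) $ k = (if k = 0 then 0 else (-1) ^ (k - 1) * (\<Sum>i\<in>J. y i ^ k))"
  by (simp add: fps_sum_nth Gy_def sum_distrib_left)

lemma newton:
  assumes "finite J"
  shows "of_nat (Suc m) * esym J y (Suc m) =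
    (\<Sum>j<Suc m. (-1) ^ j * (\<Sum>i\<in>J. y i ^ Suc j) * esym J y (m - j))"
proof -
  have "of_nat (Suc m) * esym J y (Suc m) = (fps_X * fps_deriv (EP J y)) $ Suc m"
    by (simp add: esym_def)
  also have "\<dots> = ((\<Sum>i\<in>J. Gy (y i)) * EP J y) $ Suc m"
    by (simp only: EP_deriv[OF assms])
  also have "\<dots> = (\<Sum>k=0..Suc m. (\<Sum>i\<in>J. Gy (y i)) $ k * EP J y $ (Suc m - k))"
    by (simp add: fps_mult_nth)
  also have "\<dots> = (\<Sum>k=Suc 0..Suc m. (\<Sum>i\<in>J. Gy (y i)) $ k * EP J y $ (Suc m - k))"
    by (simp add: sum.atLeast_Suc_atMost Gy_sum_nth)
  also have "\<dots> = (\<Sum>j=0..m. (\<Sum>i\<in>J. Gy (y i)) $ Suc j * EP J y $ (m - j))"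
    by (simp only: sum.shift_bounds_cl_Suc_ivl) simp
  also have "\<dots> = (\<Sum>j<Suc m. (-1) ^ j * (\<Sum>i\<in>J. y i ^ Suc j) * esym J y (m - j))"
    by (simp add: Gy_sum_nth esym_def atLeast0AtMost lessThan_Suc_atMost)
  finally show ?thesis .
qed

lemma esym_insert:
  assumes "finite J" "x \<notin> J"
  shows "esym (insert x J) y k = esym J y k + (if k = 0 then 0 else y x * esym J y (k - 1))"
proof -
  let ?P = "\<Prod>i\<in>J. 1 + fps_const (y i) * fps_X"
  have "(1 + fps_const (y x) * fps_X) * ?P = ?P + fps_const (y x) * (fps_X * ?P)"
    by (simp add: algebra_simps)
  then show ?thesis using assms by (simp add: esym_def EP_def del: fps_mult_left_const_nth) (simp add: fps_mult_left_const_nth)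
qed

lemma esym_empty: "esym {} y k = (if k = 0 then 1 else 0)"
  by (simp add: esym_def EP_def)

lemma esym_int:
  assumes pp: "prime p" and J: "finite J" and y: "\<forall>i\<in>J. pg p 0 (y i)"
  shows "pg p 0 (esym J y k)"
  using J y
proof (induction J arbitrary: k rule: finite_induct)
  case empty then show ?case by (simp add: esym_empty pg_one[OF pp] pg_zero[OF pp])
next
  case (insert x F)
  then show ?case by (simp add: esym_insert pg_zero[OF pp] pg_add[OF pp] pg_mult0[OF pp])
qed

lemma esym_big:
  assumes "finite J" "card J < k"
  shows "esym J y k = 0"
  using assms
proof (induction J arbitrary: k rule: finite_induct)
  case empty then show ?case by (simp add: esym_empty)
next
  case (insert x F)
  then show ?case by (simp add: esym_insert)
qed

lemma EP_eval:
  assumes "finite J" "card J < L"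
  shows "(\<Prod>i\<in>J. 1 + x * y i) = (\<Sum>k<L. esym J y k * x ^ k)"
  using assms
proof (induction J arbitrary: L rule: finite_induct)
  case empty
  then obtain L' where L: "L = Suc L'" by (cases L) auto
  show ?case by (auto simp: L esym_empty lessThan_Suc_eq_insert_0 zero_notin_Suc_image intro!: sum.neutral)
next
  case (insert x0 F)
  then obtain L' where L: "L = Suc L'" "card F < L'" by (cases L) auto
  have "(\<Prod>i\<in>insert x0 F. 1 + x * y i) = (1 + x * y x0) * (\<Sum>k<L'. esym F y k * x ^ k)"
    using insert L by simp
  also have "\<dots> = (\<Sum>k<L'. esym F y k * x ^ k) + (\<Sum>k<L'. y x0 * esym F y k * x ^ Suc k)"
    by (simp add: algebra_simps sum_distrib_left sum.distrib)
  also have "\<dots> = (\<Sum>k<L. esym F y k * x ^ k) + (\<Sum>k<L. (if k = 0 then 0 else y x0 * esym F y (k - 1)) * x ^ k)"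
  proof -
    have "(\<Sum>k<L. esym F y k * x ^ k) = (\<Sum>k<L'. esym F y k * x ^ k)"
      using L esym_big[OF insert(1) L(2)] by simp
    moreover have "(\<Sum>k<L. (if k = 0 then 0 else y x0 * esym F y (k - 1)) * x ^ k) = (\<Sum>k<L'. y x0 * esym F y k * x ^ Suc k)"
      unfolding L(1) sum.lessThan_Suc_shift by simp
    ultimately show ?thesis by simp
  qed
  also have "\<dots> = (\<Sum>k<L. esym (insert x0 F) y k * x ^ k)"
    by (simp only: esym_insert[OF insert(1,2)] distrib_right sum.distrib)
  finally show ?case .
qed




unbundle fps_syntax

lemma esym_0: "finite J \<Longrightarrow> esym J y 0 = 1"
  by (induction J rule: finite_induct) (simp_all add: esym_empty esym_insert)

lemma mconst_neg1: "mconst (-1) = -1"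
  by (simp add: mconst_def single_uminus)

lemma per_neg1: "per_eq Z (-1) (\<lambda>p. -1)"
proof -
  have "fps_const (-1 :: mpoly) = -1" by (metis fps_const_1_eq_1 fps_const_neg)
  then show ?thesis using per_const[of Z "-1"] by (simp add: mconst_neg1)
qed

lemma per_Ha1:
  fixes J :: "nat \<Rightarrow> nat set"
  assumes z: "ZD Z" and H: "\<forall>n\<ge>1. per_eq Z (Ha n) (\<lambda>p. \<Sum>i\<in>J p. y p i ^ n)"
    and fin: "\<forall>p. finite (J p)"
  shows "per_eq Z (Ha1 m) (\<lambda>p. esym (J p) (y p) m)"
proof (induction m rule: less_induct)
  case (less m)
  show ?case
  proof (cases m)
    case 0
    then show ?thesis using per_one[of Z] by (simp add: esym_0 fin)
  next
    case (Suc m')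
    have t: "per_eq Z ((-1) ^ j * Ha (Suc j) * Ha1 (m' - j))
        (\<lambda>p. (-1) ^ j * (\<Sum>i\<in>J p. y p i ^ Suc j) * esym (J p) (y p) (m' - j))" if "j \<in> {..<Suc m'}" for j
      by (intro per_mult[OF z] per_pow[OF z per_neg1]) (use H less Suc that in auto)
    have "per_eq Z (fps_const (mconst (1 / of_nat (Suc m'))) * (\<Sum>j<Suc m'. (-1) ^ j * Ha (Suc j) * Ha1 (m' - j)))
       (\<lambda>p. 1 / of_nat (Suc m') * (\<Sum>j<Suc m'. (-1) ^ j * (\<Sum>i\<in>J p. y p i ^ Suc j) * esym (J p) (y p) (m' - j)))"
      by (intro per_mult[OF z] per_const per_sum t)
    moreover have "1 / of_nat (Suc m') * (\<Sum>j<Suc m'. (-1) ^ j * (\<Sum>i\<in>J p. y p i ^ Suc j) * esym (J p) (y p) (m' - j))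
        = esym (J p) (y p) (Suc m')" for p
      using newton[OF fin[rule_format, of p], of m' "y p"]
      by (simp add: field_simps del: of_nat_Suc)
    ultimately show ?thesis using Suc by simp
  qed
qed

lemma ev_ca_nth: "ev Z p M (ca m $ k) = of_nat m * (\<Sum>j\<le>k. of_nat (m - 1) ^ j * ev Z p M (Ha1 j $ (k - j)))"
  by (simp add: ca_def mev_mult mev_sum sum_distrib_left mev_power)

lemma tr_ca: "tr Z p M N (ca m) = of_nat m * (\<Sum>j<N. of_nat (m - 1) ^ j * of_nat p ^ j * tr Z p M (N - j) (Ha1 j))"
proof -
  let ?g = "\<lambda>j l. of_nat (m - 1) ^ j * ev Z p M (Ha1 j $ l) * of_nat p ^ (j + l)"
  have "tr Z p M N (ca m) = of_nat m * (\<Sum>k<N. \<Sum>j\<le>k. ?g j (k - j))"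
    unfolding tr_def ev_ca_nth sum_distrib_left
    by (intro sum.cong refl) (simp add: sum_distrib_right sum_distrib_left ac_simps)
  also have "(\<Sum>k<N. \<Sum>j\<le>k. ?g j (k - j)) = (\<Sum>(j,l)\<in>{(j,l). j + l < N}. ?g j l)"
    by (rule sum.triangle_reindex[symmetric])
  also have "{(j,l). j + l < N} = Sigma {..<N} (\<lambda>j. {..<N - j})" by auto
  also have "(\<Sum>(j,l)\<in>Sigma {..<N} (\<lambda>j. {..<N - j}). ?g j l) = (\<Sum>j<N. \<Sum>l<N - j. ?g j l)"
    by (rule sum.Sigma[symmetric]) auto
  also have "\<dots> = (\<Sum>j<N. of_nat (m - 1) ^ j * of_nat p ^ j * tr Z p M (N - j) (Ha1 j))"
    unfolding tr_def sum_distrib_left by (intro sum.cong refl) (simp add: power_add ac_simps)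
  finally show ?thesis .
qed

lemma per_ca:
  fixes J :: "nat \<Rightarrow> nat set"
  assumes z: "ZD Z" and H: "\<forall>n\<ge>1. per_eq Z (Ha n) (\<lambda>p. \<Sum>i\<in>J p. y p i ^ n)"
    and fin: "\<forall>p. finite (J p)"
    and yint: "\<forall>\<^sub>F p in sequentially. prime p \<longrightarrow> (\<forall>i\<in>J p. pg p 0 (y p i))"
  shows "per_eq Z (ca m) (\<lambda>p. of_nat m * (\<Prod>i\<in>J p. 1 + of_nat (m - 1) * of_nat p * y p i))"
  unfolding per_eq_EV
proof
  fix N
  let ?e = "\<lambda>p j. esym (J p) (y p) j"
  let ?x = "\<lambda>p. of_nat (m - 1) * of_nat p :: rat"
  have A: "EV N (\<lambda>p M. of_nat m * (\<Sum>j<N. of_nat (m - 1) ^ j * (of_nat p ^ j * (tr Z p M (N - j) (Ha1 j) - ?e p j))))"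
  proof (rule EV_mult0[OF EV_const], rule EV_sum, rule EV_mult0[OF EV_const])
    fix j assume j: "j \<in> {..<N}"
    have "EV (N - j) (\<lambda>p M. tr Z p M (N - j) (Ha1 j) - ?e p j)"
      using per_Ha1[OF z H fin, of j] unfolding per_eq_EV by blast
    then have "EV (j + (N - j)) (\<lambda>p M. of_nat p ^ j * (tr Z p M (N - j) (Ha1 j) - ?e p j))"
      by (rule EV_shift)
    then show "EV N (\<lambda>p M. of_nat p ^ j * (tr Z p M (N - j) (Ha1 j) - ?e p j))"
      using j by simp
  qed
  have B: "EV N (\<lambda>p M. of_nat m * (\<Sum>j\<in>{N..<N + card (J p) + 1}. ?e p j * ?x p ^ j))"
    unfolding EV_def
  proof (rule eventually_mono[OF yint], intro impI always_eventually allI)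
    fix p M assume h: "prime p \<longrightarrow> (\<forall>i\<in>J p. pg p 0 (y p i))" and pp: "prime p"
    show "pg p N (of_nat m * (\<Sum>j\<in>{N..<N + card (J p) + 1}. ?e p j * ?x p ^ j))"
    proof (intro pg_mult0[OF pp pg_nat[OF pp]] pg_sum[OF pp])
      fix j assume j: "j \<in> {N..<N + card (J p) + 1}"
      have "pg p (j + 0) (of_nat p ^ j * (?e p j * of_nat (m - 1) ^ j))"
        by (rule pg_shift[OF pp], rule pg_mult0[OF pp esym_int[OF pp]])
           (use h pp fin in \<open>auto intro: pg_pow[OF pp]\<close>)
      then show "pg p N (?e p j * ?x p ^ j)"
        using pg_mono[OF pp, of N "j + 0"] j by (simp add: power_mult_distrib ac_simps)
    qed
  qed
  have eq: "tr Z p M N (ca m) - of_nat m * (\<Prod>i\<in>J p. 1 + of_nat (m - 1) * of_nat p * y p i) =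
     of_nat m * (\<Sum>j<N. of_nat (m - 1) ^ j * (of_nat p ^ j * (tr Z p M (N - j) (Ha1 j) - ?e p j)))
     - of_nat m * (\<Sum>j\<in>{N..<N + card (J p) + 1}. ?e p j * ?x p ^ j)" for p M
  proof -
    have "(\<Prod>i\<in>J p. 1 + of_nat (m - 1) * of_nat p * y p i) = (\<Sum>j<N + card (J p) + 1. ?e p j * ?x p ^ j)"
      by (rule EP_eval[OF fin[rule_format]]) simp
    also have "\<dots> = (\<Sum>j<N. ?e p j * ?x p ^ j) + (\<Sum>j\<in>{N..<N + card (J p) + 1}. ?e p j * ?x p ^ j)"
      by (simp add: lessThan_atLeast0 sum.atLeastLessThan_concat)
    finally show ?thesis
      by (simp add: tr_ca algebra_simps sum_subtractf sum_distrib_left power_mult_distrib)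
  qed
  show "EV N (\<lambda>p M. tr Z p M N (ca m) - of_nat m * (\<Prod>i\<in>J p. 1 + of_nat (m - 1) * of_nat p * y p i))"
    using EV_diff[OF A B] by (simp only: eq)
qed




definition Wf :: "(nat \<Rightarrow> rat) \<Rightarrow> nat \<Rightarrow> nat \<Rightarrow> rat \<Rightarrow> rat" where
  "Wf zz N n x = (\<Sum>k\<in>{1..<N}. of_nat ((n + k - 1) choose (n - 1)) * x ^ k * zz (n + k))"

lemma binom_prod:
  assumes "1 \<le> n" "s \<le> t"
  shows "((n + s - 1) choose s) * ((n + t - 1) choose (n + s - 1)) = ((n + t - 1) choose (n - 1)) * (t choose s)"
proof -
  have "((n + t - 1) choose (n + s - 1)) * ((n + s - 1) choose (n - 1)) =
        ((n + t - 1) choose (n - 1)) * (((n + t - 1) - (n - 1)) choose ((n + s - 1) - (n - 1)))"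
    by (rule choose_mult) (use assms in auto)
  moreover have "(n + s - 1) choose (n - 1) = (n + s - 1) choose s"
    using binomial_symmetric[of "n - 1" "n + s - 1"] assms by simp
  moreover have "(n + t - 1) - (n - 1) = t" "(n + s - 1) - (n - 1) = s" using assms by auto
  ultimately show ?thesis by (simp add: mult.commute)
qed

lemma sum_binom_lt: "(\<Sum>s<t. of_nat (t choose s) * (a::rat) ^ s) = (a + 1) ^ t - a ^ t"
proof -
  have "(a + 1) ^ t = (\<Sum>s\<le>t. of_nat (t choose s) * a ^ s)"
    using binomial_ring[of a 1 t] by simp
  also have "\<dots> = (\<Sum>s<t. of_nat (t choose s) * a ^ s) + a ^ t"
    by (simp add: lessThan_Suc_atMost[symmetric])
  finally show ?thesis by simp
qed

lemma comb_shift: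
  fixes zz :: "nat \<Rightarrow> rat" and a x :: rat
  assumes n: "1 \<le> n"
  defines "F \<equiv> \<lambda>s k. of_nat ((n + s - 1) choose s) * of_nat ((n + s + k - 1) choose (n + s - 1)) * a ^ s * x ^ (s + k) * zz (n + s + k)"
  shows "(\<Sum>s<N. of_nat ((n + s - 1) choose s) * (a * x) ^ s * Wf zz N (n + s) x)
     = Wf zz N n ((a + 1) * x) - Wf zz N n (a * x) + (\<Sum>(s,k)\<in>{(s,k). s < N \<and> 1 \<le> k \<and> k < N \<and> N \<le> s + k}. F s k)"
proof -
  let ?A = "{(s,k). 1 \<le> k \<and> s + k < N}"
  let ?D = "{(s,k). s < N \<and> 1 \<le> k \<and> k < N \<and> N \<le> s + k}"
  have "(\<Sum>s<N. of_nat ((n + s - 1) choose s) * (a * x) ^ s * Wf zz N (n + s) x) = (\<Sum>s<N. \<Sum>k\<in>{1..<N}. F s k)"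
    unfolding Wf_def sum_distrib_left F_def
    by (intro sum.cong refl) (simp add: power_mult_distrib power_add ac_simps)
  also have "\<dots> = (\<Sum>(s,k)\<in>{..<N} \<times> {1..<N}. F s k)"
    by (simp add: sum.cartesian_product)
  also have "{..<N} \<times> {1..<N} = ?A \<union> ?D" by auto
  also have "(\<Sum>(s,k)\<in>?A \<union> ?D. F s k) = (\<Sum>(s,k)\<in>?A. F s k) + (\<Sum>(s,k)\<in>?D. F s k)"
  proof (rule sum.union_disjoint)
    show "finite ?A" by (rule finite_subset[of _ "{..<N} \<times> {..<N}"]) auto
    show "finite ?D" by (rule finite_subset[of _ "{..<N} \<times> {..<N}"]) auto
  qed auto
  also have "(\<Sum>(s,k)\<in>?A. F s k) = (\<Sum>(t,s)\<in>Sigma {1..<N} (\<lambda>t. {..<t}). F s (t - s))"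
    by (rule sum.reindex_bij_witness[where i="\<lambda>(t,s). (s, t - s)" and j="\<lambda>(s,k). (s + k, s)"]) auto
  also have "\<dots> = (\<Sum>t\<in>{1..<N}. \<Sum>s<t. F s (t - s))"
    by (rule sum.Sigma[symmetric]) auto
  also have "\<dots> = (\<Sum>t\<in>{1..<N}. of_nat ((n + t - 1) choose (n - 1)) * x ^ t * zz (n + t) * (\<Sum>s<t. of_nat (t choose s) * a ^ s))"
  proof (intro sum.cong refl)
    fix t assume t: "t \<in> {1..<N}"
    show "(\<Sum>s<t. F s (t - s)) = of_nat ((n + t - 1) choose (n - 1)) * x ^ t * zz (n + t) * (\<Sum>s<t. of_nat (t choose s) * a ^ s)"
      unfolding sum_distrib_left
    proof (intro sum.cong refl)
      fix s assume s: "s \<in> {..<t}"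
      then have st: "s \<le> t" "n + s + (t - s) - 1 = n + t - 1" "s + (t - s) = t" "n + s + (t - s) = n + t" by auto
      have "of_nat ((n + s - 1) choose s) * of_nat ((n + t - 1) choose (n + s - 1)) =
            (of_nat ((n + t - 1) choose (n - 1)) * of_nat (t choose s) :: rat)"
        using binom_prod[OF n st(1)] by (metis of_nat_mult)
      then show "F s (t - s) = of_nat ((n + t - 1) choose (n - 1)) * x ^ t * zz (n + t) * (of_nat (t choose s) * a ^ s)"
        unfolding F_def st(2,3,4) by (simp add: ac_simps)
    qed
  qed
  also have "\<dots> = Wf zz N n ((a + 1) * x) - Wf zz N n (a * x)"
    unfolding Wf_def sum_binom_lt sum_subtractf[symmetric]
    by (intro sum.cong refl) (simp only: power_mult_distrib, simp add: algebra_simps)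
  finally show ?thesis by simp
qed

definition Tn :: "nat \<Rightarrow> nat \<Rightarrow> rat \<Rightarrow> rat" where
  "Tn N n u = (\<Sum>s<N. of_nat ((n + s - 1) choose s) * (- u) ^ s)"

lemma Tn_1: "(1 + u) * Tn N 1 u = 1 - (- u) ^ N"
proof -
  have "Tn N 1 u = (\<Sum>s<N. (- u) ^ s)" by (simp add: Tn_def)
  moreover have "(1 + u) * (\<Sum>s<N. (- u) ^ s) = 1 - (- u) ^ N"
    by (induction N) (simp_all add: algebra_simps)
  ultimately show ?thesis by simp
qed

lemma Tn_step:
  assumes "1 \<le> n" "1 \<le> N"
  shows "(1 + u) * Tn N (Suc n) u = Tn N n u + u * of_nat ((n + N - 1) choose (N - 1)) * (- u) ^ (N - 1)"
proof -
  obtain N' where N': "N = Suc N'" using assms(2) by (cases N) auto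
  have pas: "(n + Suc k) choose Suc k = ((n + k) choose Suc k) + ((n + k) choose k)" for k
    using binomial_Suc_Suc[of "n + k" k] by simp
  have "Tn N (Suc n) u = 1 + (\<Sum>k<N'. of_nat ((n + Suc k) choose Suc k) * (- u) ^ Suc k)"
    unfolding Tn_def N' sum.lessThan_Suc_shift by simp
  also have "\<dots> = 1 + (\<Sum>k<N'. of_nat ((n + k) choose Suc k) * (- u) ^ Suc k) + (\<Sum>k<N'. of_nat ((n + k) choose k) * (- u) ^ Suc k)"
    unfolding pas by (simp add: distrib_right sum.distrib sum_subtractf sum_negf)
  also have "1 + (\<Sum>k<N'. of_nat ((n + k) choose Suc k) * (- u) ^ Suc k) = Tn N n u"
    unfolding Tn_def N' sum.lessThan_Suc_shift using assms(1) by simp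
  also have "(\<Sum>k<N'. of_nat ((n + k) choose k) * (- u) ^ Suc k) = - u * (Tn N (Suc n) u - of_nat ((n + N') choose N') * (- u) ^ N')"
    unfolding Tn_def N' by (simp add: sum_distrib_left ac_simps)
  finally have "Tn N (Suc n) u = Tn N n u - u * (Tn N (Suc n) u - of_nat ((n + N') choose N') * (- u) ^ N')" by simp
  then show ?thesis using N' by (simp add: algebra_simps)
qed




definition pc :: "nat \<Rightarrow> nat \<Rightarrow> rat \<Rightarrow> rat \<Rightarrow> bool" where
  "pc p N x y \<longleftrightarrow> pg p N (x - y)"

context fixes p :: nat assumes pp: "prime p" begin

lemma pc_refl: "x = y \<Longrightarrow> pc p N x y"
  by (simp add: pc_def pg_zero[OF pp])

lemma pc_trans: "pc p N x y \<Longrightarrow> pc p N y z \<Longrightarrow> pc p N x z"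
  unfolding pc_def using pg_add[OF pp] by fastforce

lemma pc_sym: "pc p N x y \<Longrightarrow> pc p N y x"
  unfolding pc_def using pg_uminus[OF pp] by fastforce

lemma pc_add: "pc p N x y \<Longrightarrow> pc p N x' y' \<Longrightarrow> pc p N (x + x') (y + y')"
  unfolding pc_def using pg_add[OF pp] by (fastforce simp: add_diff_add)

lemma pc_sum: "(\<And>i. i \<in> A \<Longrightarrow> pc p N (f i) (g i)) \<Longrightarrow> pc p N (sum f A) (sum g A)"
  unfolding pc_def sum_subtractf[symmetric] by (rule pg_sum[OF pp])

lemma pc_mult: "pg p 0 c \<Longrightarrow> pc p N x y \<Longrightarrow> pc p N (c * x) (c * y)"
  unfolding pc_def using pg_mult0[OF pp] by (fastforce simp: right_diff_distrib[symmetric])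

lemma pc_zero: "pg p N x \<Longrightarrow> pc p N (y + x) y"
  by (simp add: pc_def)

lemma pg_pow_mult: "pg p k x \<Longrightarrow> pg p (k * n) (x ^ n)"
  by (induction n) (auto simp: pg_one[OF pp] intro: pg_mono[OF pp, of 0] dest: pg_mult[OF pp])

lemma Tn_prod:
  assumes u: "pg p 1 u" and n: "1 \<le> n" and N: "1 \<le> N"
  shows "pg p N ((1 + u) ^ n * Tn N n u - 1)"
  using n
proof (induction n rule: dec_induct)
  case base
  have "pg p (1 * N) ((- u) ^ N)" by (rule pg_pow_mult, rule pg_uminus[OF pp u])
  then show ?case using Tn_1[of u N] by (simp add: pg_uminus[OF pp])
next
  case (step n)
  have u0: "pg p 0 (1 + u)" using pg_add[OF pp pg_one[OF pp] pg_mono[OF pp _ u]] by simp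
  have "pg p (1 * N) ((- u) ^ N)" by (rule pg_pow_mult, rule pg_uminus[OF pp u])
  then have t: "pg p N (u * (- u) ^ (N - 1))"
    using N by (cases N) (auto simp: pg_uminus[OF pp] dest: pg_uminus[OF pp])
  have eq: "(1 + u) ^ Suc n * Tn N (Suc n) u - 1 = ((1 + u) ^ n * Tn N n u - 1)
      + (1 + u) ^ n * of_nat ((n + N - 1) choose (N - 1)) * (u * (- u) ^ (N - 1))"
  proof -
    have "(1 + u) ^ Suc n * Tn N (Suc n) u = (1 + u) ^ n * ((1 + u) * Tn N (Suc n) u)"
      by (simp add: ac_simps)
    also have "\<dots> = (1 + u) ^ n * (Tn N n u + u * of_nat ((n + N - 1) choose (N - 1)) * (- u) ^ (N - 1))"
      by (simp only: Tn_step[OF step(1) N, of u])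
    finally show ?thesis by (simp add: algebra_simps)
  qed
  have X: "pg p N ((1 + u) ^ n * of_nat ((n + N - 1) choose (N - 1)) * (u * (- u) ^ (N - 1)))"
    by (intro pg_mult0[OF pp] pg_pow[OF pp u0] pg_nat[OF pp] t)
  show ?case unfolding eq by (rule pg_add[OF pp step(3) X])
qed

lemma binser:
  assumes u: "pg p 1 u" and n: "1 \<le> n" and N: "1 \<le> N"
  shows "pg p N (Tn N n u - 1 / (1 + u) ^ n)"
proof -
  obtain e where e: "u = of_nat p * e" "pg p 0 e" using pg_Suc_split[of p 0 u] u by auto
  have inv: "pg p 0 (1 / (1 + u))" using pg_unit_inv[OF pp e(2)] e(1) by simp
  have ne: "1 + u \<noteq> 0"
  proof
    assume "1 + u = 0"
    then have "pg p 1 (- 1)" using u by (simp add: eq_neg_iff_add_eq_0[symmetric] add_eq_0_iff2)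
    then show False using pg_not_one[OF pp, of 0] pg_uminus[OF pp] by fastforce
  qed
  have "Tn N n u - 1 / (1 + u) ^ n = (1 / (1 + u)) ^ n * ((1 + u) ^ n * Tn N n u - 1)"
    using ne by (simp add: field_simps)
  then show ?thesis using pg_mult0[OF pp pg_pow[OF pp inv] Tn_prod[OF u n N]] by simp
qed

end

lemma Wf_zero [simp]: "Wf zz N n 0 = 0"
  by (auto simp: Wf_def intro!: sum.neutral)

lemma Wf_telescope: "Wf zz N n (of_nat r * x) = (\<Sum>a<r. Wf zz N n ((of_nat a + 1) * x) - Wf zz N n (of_nat a * x))"
  using sum_lessThan_telescope[of "\<lambda>a. Wf zz N n (of_nat a * x)" r] by (simp add: add.commute)




lemma reindex_I:
  fixes f :: "nat \<Rightarrow> rat" and p :: nat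
  assumes p: "0 < p"
  shows "(\<Sum>a<r. \<Sum>j\<in>{1..p-1}. f (j + a * p)) = (\<Sum>i\<in>{i. 1 \<le> i \<and> i < r * p \<and> \<not> p dvd i}. f i)"
proof -
  have "(\<Sum>a<r. \<Sum>j\<in>{1..p-1}. f (j + a * p)) = (\<Sum>(a,j)\<in>{..<r} \<times> {1..p-1}. f (j + a * p))"
    by (simp add: sum.cartesian_product)
  also have "\<dots> = (\<Sum>i\<in>{i. 1 \<le> i \<and> i < r * p \<and> \<not> p dvd i}. f i)"
    apply (rule sum.reindex_bij_witness[where i="\<lambda>i. (i div p, i mod p)" and j="\<lambda>(a,j). j + a * p"])
    subgoal for aj using p by (cases aj) auto
    subgoal premises prems for aj
    proof (cases aj)
      case (Pair a j)
      with prems have a: "a < r" and j: "1 \<le> j" "j < p" using p by auto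
      have "j + a * p < p + a * p" using j by simp
      also have "\<dots> = (Suc a) * p" by simp
      also have "\<dots> \<le> r * p" using a by (intro mult_right_mono) auto
      finally have "j + a * p < r * p" .
      moreover have "\<not> p dvd (j + a * p)" using j by (auto simp: dvd_add_left_iff dest: dvd_imp_le)
      ultimately show ?thesis using Pair j by auto
    qed
    subgoal for i by simp
    subgoal premises i for i
    proof -
      have "i mod p \<noteq> 0" using i by (auto simp: dvd_eq_mod_eq_0)
      moreover have "i mod p < p" using p by simp
      moreover have "i div p < r" using i by (simp add: div_less_iff_less_mult p)
      ultimately show ?thesis by auto
    qed
    subgoal for aj by (cases aj) simp
    done
  finally show ?thesis .
qed

lemma s_A2: "pg p N ((-1) ^ m * ((-1) ^ m * W - S)) \<Longrightarrow> pc p N (W::rat) ((-1) ^ m * S)"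
proof -
  assume h: "pg p N ((-1) ^ m * ((-1) ^ m * W - S))"
  have "(-1::rat) ^ m * ((-1) ^ m * W - S) = W - (-1) ^ m * S"
    by (simp add: right_diff_distrib mult.assoc[symmetric] power_mult_distrib[symmetric])
  then show ?thesis using h by (simp add: pc_def)
qed

lemma s_A3: "(c::rat) * (a * x) ^ s * ((-1) ^ (n + s) * (1 / j) ^ (n + s))
   = (-1) ^ n * ((1 / j) ^ n * (c * (- (a * x / j)) ^ s))"
proof -
  have "(- (a * x / j)) ^ s = (-1) ^ s * (a * x) ^ s * (1 / j) ^ s"
    by (simp add: power_minus[of "a * x / j"] power_divide power_mult_distrib)
  then show ?thesis by (simp add: power_add)
qed

lemma s_c3: "(-1::rat) ^ n * ((-1) ^ n * X) = X"
  by (simp add: mult.assoc[symmetric] power_mult_distrib[symmetric])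

lemma s_A4: "(j::rat) \<noteq> 0 \<Longrightarrow> (1 / j) ^ n * (1 / (1 + a * x / j) ^ n) = (1 / (j + a * x)) ^ n"
proof -
  assume j0: "j \<noteq> 0"
  have "(1 / j) * (1 / (1 + a * x / j)) = 1 / (j + a * x)"
  proof (cases "j + a * x = 0")
    case True
    then have "1 + a * x / j = 0" using j0 by (simp add: field_simps)
    then show ?thesis using True by simp
  next
    case False
    then show ?thesis using j0 by (simp add: field_simps)
  qed
  then show ?thesis by (metis power_mult_distrib power_one_over)
qed

lemma PW:
  fixes p N n r :: nat and zz :: "nat \<Rightarrow> rat"
  assumes pp: "prime p" and N: "1 \<le> N" and n: "1 \<le> n"
    and F1: "\<forall>s<N. pg p N ((-1) ^ (n + s) * Wf zz N (n + s) (of_nat p) - (\<Sum>j=1..p-1. (1 / of_nat j) ^ (n + s)))"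
    and F2: "\<forall>m < n + 2 * N. pg p 0 (zz m)"
  shows "pg p N ((-1) ^ n * of_nat r ^ n * Wf zz N n (of_nat r * of_nat p)
           - (\<Sum>a<r. \<Sum>j=1..p-1. (of_nat r / (of_nat j + of_nat a * of_nat p)) ^ n))"
proof -
  let ?x = "of_nat p :: rat"
  let ?S = "\<lambda>m. (\<Sum>j=1..p-1. (1 / of_nat j) ^ m :: rat)"
  let ?C = "\<lambda>s. of_nat ((n + s - 1) choose s) :: rat"
  have m1: "pg p 0 ((-1 :: rat) ^ k)" for k by (rule pg_pow[OF pp], rule pg_uminus[OF pp pg_one[OF pp]])
  have step: "pc p N ((-1) ^ n * (Wf zz N n ((of_nat a + 1) * ?x) - Wf zz N n (of_nat a * ?x)))
                  (\<Sum>j=1..p-1. (1 / (of_nat j + of_nat a * ?x)) ^ n)" for a :: nat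
  proof -
    let ?D = "Wf zz N n ((of_nat a + 1) * ?x) - Wf zz N n (of_nat a * ?x)"
    let ?L = "\<Sum>s<N. ?C s * (of_nat a * ?x) ^ s * Wf zz N (n + s) ?x"
    have A1: "pc p N ?D ?L"
    proof -
      let ?R = "\<Sum>(s,k)\<in>{(s,k). s < N \<and> 1 \<le> k \<and> k < N \<and> N \<le> s + k}.
         ?C s * of_nat ((n + s + k - 1) choose (n + s - 1)) * of_nat a ^ s * ?x ^ (s + k) * zz (n + s + k)"
      have eq: "?L = ?D + ?R" using comb_shift[OF n, where zz=zz and N=N and a="of_nat a" and x="?x"] by simp
      have "pg p N ?R"
      proof (rule pg_sum[OF pp])
        fix sk assume sk: "sk \<in> {(s,k). s < N \<and> 1 \<le> k \<and> k < N \<and> N \<le> s + k}"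
        obtain s k where e: "sk = (s,k)" by (cases sk)
        have b: "s < N" "k < N" "N \<le> s + k" using sk e by auto
        have "pg p ((s + k) + 0) (?x ^ (s + k) * (?C s * of_nat ((n + s + k - 1) choose (n + s - 1)) * of_nat a ^ s * zz (n + s + k)))"
          by (rule pg_shift[OF pp]) (intro pg_mult0[OF pp] pg_nat[OF pp] pg_pow[OF pp], use F2 b in auto)
        then have "pg p N (?x ^ (s + k) * (?C s * of_nat ((n + s + k - 1) choose (n + s - 1)) * of_nat a ^ s * zz (n + s + k)))"
          using pg_mono[OF pp b(3)] by simp
        then show "pg p N (case sk of (s, k) \<Rightarrow> ?C s * of_nat ((n + s + k - 1) choose (n + s - 1)) * of_nat a ^ s * ?x ^ (s + k) * zz (n + s + k))"
          using e by (simp add: ac_simps)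
      qed
      then have "pc p N (?D + ?R) ?D" by (simp add: pc_def)
      then show ?thesis unfolding eq[symmetric] by (rule pc_sym[OF pp])
    qed
    have A2: "pc p N ?L (\<Sum>s<N. ?C s * (of_nat a * ?x) ^ s * ((-1) ^ (n + s) * ?S (n + s)))"
    proof (rule pc_sum[OF pp], rule pc_mult[OF pp])
      fix s assume s: "s \<in> {..<N}"
      show "pg p 0 (?C s * (of_nat a * ?x) ^ s)" by (intro pg_mult0[OF pp] pg_nat[OF pp] pg_pow[OF pp])
      have "pg p N ((-1) ^ (n + s) * ((-1) ^ (n + s) * Wf zz N (n + s) ?x - ?S (n + s)))"
        using pg_mult0[OF pp m1] F1 s by auto
      then show "pc p N (Wf zz N (n + s) ?x) ((-1) ^ (n + s) * ?S (n + s))"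
        by (rule s_A2)
    qed
    have A3: "(\<Sum>s<N. ?C s * (of_nat a * ?x) ^ s * ((-1) ^ (n + s) * ?S (n + s)))
        = (-1) ^ n * (\<Sum>j=1..p-1. (1 / of_nat j) ^ n * Tn N n (of_nat a * ?x / of_nat j))"
    proof -
      have "(\<Sum>s<N. ?C s * (of_nat a * ?x) ^ s * ((-1) ^ (n + s) * ?S (n + s)))
          = (\<Sum>s<N. \<Sum>j=1..p-1. (-1) ^ n * ((1 / of_nat j) ^ n * (?C s * (- (of_nat a * ?x / of_nat j)) ^ s)))"
        unfolding sum_distrib_left
        by (intro sum.cong refl) (rule s_A3)
      also have "\<dots> = (\<Sum>j=1..p-1. \<Sum>s<N. (-1) ^ n * ((1 / of_nat j) ^ n * (?C s * (- (of_nat a * ?x / of_nat j)) ^ s)))"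
        by (rule sum.swap)
      also have "\<dots> = (-1) ^ n * (\<Sum>j=1..p-1. (1 / of_nat j) ^ n * Tn N n (of_nat a * ?x / of_nat j))"
        by (simp add: Tn_def sum_distrib_left)
      finally show ?thesis .
    qed
    have A4: "pc p N ((1 / of_nat j) ^ n * Tn N n (of_nat a * ?x / of_nat j)) ((1 / (of_nat j + of_nat a * ?x)) ^ n)"
      if j: "j \<in> {1..p-1}" for j
    proof -
      have nd: "\<not> p dvd j" using j pp by (auto dest: dvd_imp_le simp: prime_gt_0_nat)
      have j0: "(of_nat j :: rat) \<noteq> 0" using j by auto
      have "pg p (1 + 0) (?x ^ 1 * (of_nat a * (1 / of_nat j)))"
        by (rule pg_shift[OF pp], rule pg_mult0[OF pp pg_nat[OF pp] pg_inv_nat[OF pp nd]])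
      then have u: "pg p 1 (of_nat a * ?x / of_nat j)" by (simp add: ac_simps)
      have "pc p N ((1 / of_nat j) ^ n * Tn N n (of_nat a * ?x / of_nat j))
                   ((1 / of_nat j) ^ n * (1 / (1 + of_nat a * ?x / of_nat j) ^ n))"
        using pc_mult[OF pp pg_pow[OF pp pg_inv_nat[OF pp nd]] binser[OF pp u n N, unfolded pc_def[symmetric]]] .
      moreover have "(1 / of_nat j) ^ n * (1 / (1 + of_nat a * ?x / of_nat j) ^ n) = (1 / (of_nat j + of_nat a * ?x)) ^ n"
        by (rule s_A4[OF j0])
      ultimately show ?thesis by simp
    qed
    have c1: "pc p N ((-1) ^ n * ?D) ((-1) ^ n * ?L)" by (rule pc_mult[OF pp m1 A1])
    have c2: "pc p N ((-1) ^ n * ?L) ((-1) ^ n * (\<Sum>s<N. ?C s * (of_nat a * ?x) ^ s * ((-1) ^ (n + s) * ?S (n + s))))"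
      by (rule pc_mult[OF pp m1 A2])
    have c3: "(-1) ^ n * (\<Sum>s<N. ?C s * (of_nat a * ?x) ^ s * ((-1) ^ (n + s) * ?S (n + s)))
        = (\<Sum>j=1..p-1. (1 / of_nat j) ^ n * Tn N n (of_nat a * ?x / of_nat j))"
      unfolding A3 by (rule s_c3)
    have c4: "pc p N (\<Sum>j=1..p-1. (1 / of_nat j) ^ n * Tn N n (of_nat a * ?x / of_nat j)) (\<Sum>j=1..p-1. (1 / (of_nat j + of_nat a * ?x)) ^ n)"
      by (rule pc_sum[OF pp A4])
    show ?thesis using pc_trans[OF pp c1 pc_trans[OF pp c2 c4[folded c3]]] .
  qed
  have tot: "pc p N (\<Sum>a<r. (-1) ^ n * (Wf zz N n ((of_nat a + 1) * ?x) - Wf zz N n (of_nat a * ?x)))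
                 (\<Sum>a<r. \<Sum>j=1..p-1. (1 / (of_nat j + of_nat a * ?x)) ^ n)"
    by (rule pc_sum[OF pp step])
  have "pc p N (of_nat r ^ n * (\<Sum>a<r. (-1) ^ n * (Wf zz N n ((of_nat a + 1) * ?x) - Wf zz N n (of_nat a * ?x))))
                 (of_nat r ^ n * (\<Sum>a<r. \<Sum>j=1..p-1. (1 / (of_nat j + of_nat a * ?x)) ^ n))"
    by (rule pc_mult[OF pp pg_pow[OF pp pg_nat[OF pp]] tot])
  moreover have "of_nat r ^ n * (\<Sum>a<r. (-1) ^ n * (Wf zz N n ((of_nat a + 1) * ?x) - Wf zz N n (of_nat a * ?x)))
      = (-1) ^ n * of_nat r ^ n * Wf zz N n (of_nat r * ?x)"
    by (subst Wf_telescope[of zz N n r ?x]) (simp only: sum_distrib_left[symmetric] ac_simps)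
  moreover have "of_nat r ^ n * (\<Sum>a<r. \<Sum>j=1..p-1. (1 / (of_nat j + of_nat a * ?x)) ^ n)
      = (\<Sum>a<r. \<Sum>j=1..p-1. (of_nat r / (of_nat j + of_nat a * ?x)) ^ n)"
    by (simp add: sum_distrib_left power_divide)
  ultimately show ?thesis by (simp add: pc_def)
qed




unbundle fps_syntax

definition zr :: "rat \<Rightarrow> (nat \<Rightarrow> nat \<Rightarrow> nat \<Rightarrow> rat) \<Rightarrow> nat \<Rightarrow> nat \<Rightarrow> nat \<Rightarrow> rat" where
  "zr r zeta = (\<lambda>p j M. r ^ j * zeta p j M)"

definition zzf :: "(nat \<Rightarrow> nat \<Rightarrow> nat \<Rightarrow> rat) \<Rightarrow> nat \<Rightarrow> nat \<Rightarrow> nat \<Rightarrow> rat" where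
  "zzf zeta p M m = mev (\<lambda>j. zeta p j M) (zeta_a m)"

definition Iset :: "nat \<Rightarrow> nat \<Rightarrow> nat set" where
  "Iset r p = {i. 1 \<le> i \<and> i < r * p \<and> \<not> p dvd i}"

lemma ZD_zeta_aux:
  assumes zd: "padic_zeta_data zeta" and "Suc j \<le> p" "prime p"
  shows "\<forall>\<^sub>F M in sequentially. pg p 0 (zeta p j M)"
proof -
  have "padic_lim_ge p (zeta p j) 0" using assms unfolding padic_zeta_data_def by auto
  then show ?thesis unfolding padic_lim_ge_def pg_def eventually_sequentially by simp
qed

lemma ZD_zeta: "padic_zeta_data zeta \<Longrightarrow> ZD zeta"
  unfolding ZD_def EV_def
  by (intro allI, subst eventually_sequentially, blast intro: ZD_zeta_aux)

lemma ZD_zr: "ZD zeta \<Longrightarrow> ZD (zr (of_nat r) zeta)"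
  unfolding ZD_def zr_def
  by (auto intro!: EV_mult0 EV_pow EV_const simp del: of_nat_power simp add: of_nat_power[symmetric])

lemma mev_zr_zeta_a: "mev (\<lambda>j. zr c zeta p j M) (zeta_a m) = c ^ m * zzf zeta p M m"
  by (simp add: zr_def zzf_def mev_zeta_a)

lemma mev_neg1_pow: "mev z ((-1) ^ n) = (-1) ^ n"
  by (simp add: mev_power mev_uminus)

lemma sum_drop0: "g 0 = 0 \<Longrightarrow> (\<Sum>k<(N::nat). g k) = (\<Sum>k\<in>{1..<N}. (g k :: rat))"
  by (cases N) (simp_all add: lessThan_atLeast0 sum.atLeast_Suc_lessThan)

lemma tr_zeta_Ha: "tr zeta p M N (Ha n) = (-1) ^ n * Wf (zzf zeta p M) N n (of_nat p)"
proof -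
  have "tr zeta p M N (Ha n) = (\<Sum>k\<in>{1..<N}. ev zeta p M (Ha n $ k) * of_nat p ^ k)"
    unfolding tr_def by (rule sum_drop0) (simp add: Ha_def)
  also have "\<dots> = (-1) ^ n * Wf (zzf zeta p M) N n (of_nat p)"
    unfolding Wf_def sum_distrib_left
    by (intro sum.cong refl) (simp add: Ha_def mev_mult mev_neg1_pow zzf_def)
  finally show ?thesis .
qed

lemma tr_zr_Ha: "tr (zr c zeta) p M N (Ha n) = (-1) ^ n * c ^ n * Wf (zzf zeta p M) N n (c * of_nat p)"
proof -
  have "tr (zr c zeta) p M N (Ha n) = (\<Sum>k\<in>{1..<N}. ev (zr c zeta) p M (Ha n $ k) * of_nat p ^ k)"
    unfolding tr_def by (rule sum_drop0) (simp add: Ha_def)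
  also have "\<dots> = (-1) ^ n * c ^ n * Wf (zzf zeta p M) N n (c * of_nat p)"
    unfolding Wf_def sum_distrib_left
    by (intro sum.cong refl) (simp add: Ha_def mev_mult mev_neg1_pow mev_zr_zeta_a power_add power_mult_distrib)
  finally show ?thesis .
qed

lemma EV_ball:
  assumes "finite A" "\<And>a. a \<in> A \<Longrightarrow> EV N (X a)"
  shows "\<forall>\<^sub>F p in sequentially. prime p \<longrightarrow> (\<forall>\<^sub>F M in sequentially. \<forall>a\<in>A. pg p N (X a p M))"
proof -
  have "\<forall>\<^sub>F p in sequentially. \<forall>a\<in>A. prime p \<longrightarrow> (\<forall>\<^sub>F M in sequentially. pg p N (X a p M))"
    by (rule eventually_ball_finite[OF assms(1)]) (use assms(2) in \<open>auto simp: EV_def\<close>)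
  then show ?thesis
    by (rule eventually_mono) (auto intro: eventually_ball_finite[OF assms(1)])
qed

lemma per_Ha_r:
  assumes zd: "padic_zeta_data zeta" and r: "1 \<le> r" and n: "1 \<le> n"
  shows "per_eq (zr (of_nat r) zeta) (Ha n) (\<lambda>p. \<Sum>i\<in>Iset r p. (of_nat r / of_nat i) ^ n)"
proof -
  have z: "ZD zeta" using ZD_zeta[OF zd] .
  have dat: "per_eq zeta (Ha m) (\<lambda>p. \<Sum>j=1..p-1. (1 / of_nat j) ^ m)" if "1 \<le> m" for m
    using zd that unfolding padic_zeta_data_def by blast
  have main: "EV N (\<lambda>p M. tr (zr (of_nat r) zeta) p M N (Ha n) - (\<Sum>i\<in>Iset r p. (of_nat r / of_nat i) ^ n))"
    if N: "1 \<le> N" for N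
  proof -
    have E1: "\<forall>\<^sub>F p in sequentially. prime p \<longrightarrow> (\<forall>\<^sub>F M in sequentially. \<forall>s\<in>{..<N}.
        pg p N (tr zeta p M N (Ha (n + s)) - (\<Sum>j=1..p-1. (1 / of_nat j) ^ (n + s))))"
      by (rule EV_ball) (use dat n in \<open>auto simp: per_eq_EV\<close>)
    have E2: "\<forall>\<^sub>F p in sequentially. prime p \<longrightarrow> (\<forall>\<^sub>F M in sequentially. \<forall>m\<in>{..<n + 2 * N}.
        pg p 0 (zzf zeta p M m))"
      by (rule EV_ball) (auto simp: zzf_def intro: EV_ev[OF z])
    show ?thesis unfolding EV_def
    proof (rule eventually_mono[OF eventually_conj[OF E1 E2]], intro impI)
      fix p assume h: "(prime p \<longrightarrow> (\<forall>\<^sub>F M in sequentially. \<forall>s\<in>{..<N}.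
              pg p N (tr zeta p M N (Ha (n + s)) - (\<Sum>j=1..p-1. (1 / of_nat j) ^ (n + s))))) \<and>
          (prime p \<longrightarrow> (\<forall>\<^sub>F M in sequentially. \<forall>m\<in>{..<n + 2 * N}. pg p 0 (zzf zeta p M m)))"
        and pp: "prime p"
      show "\<forall>\<^sub>F M in sequentially. pg p N (tr (zr (of_nat r) zeta) p M N (Ha n) - (\<Sum>i\<in>Iset r p. (of_nat r / of_nat i) ^ n))"
      proof (rule eventually_mono[OF eventually_conj[OF h[THEN conjunct1, rule_format, OF pp] h[THEN conjunct2, rule_format, OF pp]]])
        fix M assume hM: "(\<forall>s\<in>{..<N}. pg p N (tr zeta p M N (Ha (n + s)) - (\<Sum>j=1..p-1. (1 / of_nat j) ^ (n + s)))) \<and>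
            (\<forall>m\<in>{..<n + 2 * N}. pg p 0 (zzf zeta p M m))"
        have "pg p N ((-1) ^ n * of_nat r ^ n * Wf (zzf zeta p M) N n (of_nat r * of_nat p)
           - (\<Sum>a<r. \<Sum>j=1..p-1. (of_nat r / (of_nat j + of_nat a * of_nat p)) ^ n))"
          by (rule PW[OF pp N n]) (use hM in \<open>auto simp: tr_zeta_Ha\<close>)
        moreover have "(\<Sum>a<r. \<Sum>j=1..p-1. (of_nat r / (of_nat j + of_nat a * of_nat p)) ^ n) =
            (\<Sum>i\<in>Iset r p. (of_nat r / of_nat i) ^ n :: rat)"
          using reindex_I[of p "\<lambda>i. (of_nat r / of_nat i) ^ n" r] pp
          unfolding Iset_def by (simp add: prime_gt_0_nat)
        ultimately show "pg p N (tr (zr (of_nat r) zeta) p M N (Ha n) - (\<Sum>i\<in>Iset r p. (of_nat r / of_nat i) ^ n))"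
          by (simp add: tr_zr_Ha)
      qed
    qed
  qed
  show ?thesis unfolding per_eq_EV
  proof
    fix N show "EV N (\<lambda>p M. tr (zr (of_nat r) zeta) p M N (Ha n) - (\<Sum>i\<in>Iset r p. (of_nat r / of_nat i) ^ n))"
    proof (cases "N = 0")
      case True
      then show ?thesis using EV_lower[OF ZD_zr[OF z] main[of 1]] by simp
    qed (use main in simp)
  qed
qed




definition Qp :: "nat \<Rightarrow> nat \<Rightarrow> rat" where
  "Qp p L = (\<Prod>i\<in>{i. 1 \<le> i \<and> i \<le> L * p \<and> \<not> p dvd i}. of_nat i)"

lemma Qp_nz: "Qp p L \<noteq> 0"
  unfolding Qp_def by (subst prod_zero_iff) auto

lemma Qp_fact:
  assumes p: "0 < p"
  shows "of_nat (fact (L * p)) = Qp p L * of_nat p ^ L * (of_nat (fact L) :: rat)"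
proof -
  let ?NM = "{i. 1 \<le> i \<and> i \<le> L * p \<and> \<not> p dvd i}"
  let ?MU = "{i. 1 \<le> i \<and> i \<le> L * p \<and> p dvd i}"
  have u: "{1..L * p} = ?NM \<union> ?MU" by auto
  have mu: "?MU = (\<lambda>k. k * p) ` {1..L}"
  proof
    show "?MU \<subseteq> (\<lambda>k. k * p) ` {1..L}"
    proof
      fix i assume "i \<in> ?MU"
      then obtain k where k: "i = p * k" "1 \<le> i" "i \<le> L * p" by (auto elim: dvdE)
      then have "1 \<le> k" "k \<le> L" using p by (auto simp: mult.commute[of p])
      then show "i \<in> (\<lambda>k. k * p) ` {1..L}" using k by (auto simp: mult.commute)
    qed
  next
    show "(\<lambda>k. k * p) ` {1..L} \<subseteq> ?MU" using p by auto
  qed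
  have "(of_nat (fact (L * p)) :: rat) = (\<Prod>i\<in>{1..L * p}. of_nat i)"
    by (simp add: fact_prod)
  also have "\<dots> = (\<Prod>i\<in>?NM. of_nat i) * (\<Prod>i\<in>?MU. of_nat i)"
    unfolding u by (rule prod.union_disjoint) auto
  also have "(\<Prod>i\<in>?MU. (of_nat i :: rat)) = (\<Prod>k\<in>{1..L}. of_nat (k * p))"
    unfolding mu using p by (subst prod.reindex) (auto simp: inj_on_def)
  also have "\<dots> = of_nat p ^ L * of_nat (fact L)"
    by (simp add: prod.distrib fact_prod mult.commute)
  finally show ?thesis by (simp add: Qp_def ac_simps)
qed

lemma Qp_I:
  assumes p: "0 < p"
  shows "(\<Prod>i\<in>Iset r p. (of_nat i :: rat)) = Qp p r"
proof -
  have "Iset r p = {i. 1 \<le> i \<and> i \<le> r * p \<and> \<not> p dvd i}"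
    unfolding Iset_def using p by (auto simp: le_less)
  then show ?thesis by (simp add: Qp_def)
qed

lemma Qp_step:
  assumes p: "0 < p"
  shows "(\<Prod>i\<in>Iset r p. (of_nat i + of_nat (b * r * p) :: rat)) * Qp p (b * r) = Qp p (Suc b * r)"
proof -
  let ?s = "b * r * p"
  let ?A = "{i. 1 \<le> i \<and> i \<le> b * r * p \<and> \<not> p dvd i}"
  let ?B = "{j. ?s + 1 \<le> j \<and> j < ?s + r * p \<and> \<not> p dvd j}"
  have ds: "p dvd ?s" by simp
  have img: "(\<lambda>i. i + ?s) ` Iset r p = ?B"
  proof
    show "(\<lambda>i. i + ?s) ` Iset r p \<subseteq> ?B"
      using ds by (auto simp: Iset_def dvd_add_left_iff)
  next
    show "?B \<subseteq> (\<lambda>i. i + ?s) ` Iset r p"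
    proof
      fix j assume j: "j \<in> ?B"
      have nd: "\<not> p dvd (j - ?s)"
      proof
        assume "p dvd (j - ?s)"
        then have "p dvd (j - ?s) + ?s" using ds by (rule dvd_add)
        moreover have "(j - ?s) + ?s = j" using j by auto
        ultimately show False using j by auto
      qed
      have "j - ?s \<in> Iset r p"
        using j nd by (auto simp: Iset_def)
      moreover have "j = (j - ?s) + ?s" using j by auto
      ultimately show "j \<in> (\<lambda>i. i + ?s) ` Iset r p" by blast
    qed
  qed
  have "(\<Prod>i\<in>Iset r p. (of_nat i + of_nat ?s :: rat)) = (\<Prod>i\<in>Iset r p. of_nat (i + ?s))" by simp
  also have "\<dots> = (\<Prod>j\<in>?B. of_nat j)"
    unfolding img[symmetric] by (subst prod.reindex) (auto simp: inj_on_def)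
  finally have e1: "(\<Prod>i\<in>Iset r p. (of_nat i + of_nat ?s :: rat)) = (\<Prod>j\<in>?B. of_nat j)" .
  have "{i. 1 \<le> i \<and> i \<le> Suc b * r * p \<and> \<not> p dvd i} = ?B \<union> ?A"
  proof (intro equalityI subsetI)
    fix i assume i: "i \<in> {i. 1 \<le> i \<and> i \<le> Suc b * r * p \<and> \<not> p dvd i}"
    have "i \<noteq> Suc b * r * p" using i by auto
    then show "i \<in> ?B \<union> ?A" using i by (auto simp: algebra_simps)
  qed (auto simp: algebra_simps)
  moreover have "(\<Prod>j\<in>?B \<union> ?A. (of_nat j :: rat)) = (\<Prod>j\<in>?B. of_nat j) * (\<Prod>j\<in>?A. of_nat j)"
    by (rule prod.union_disjoint) auto
  ultimately have "Qp p (Suc b * r) = (\<Prod>j\<in>?B. of_nat j) * Qp p (b * r)"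
    unfolding Qp_def by simp
  then show ?thesis using e1 by simp
qed

lemma Qp_0 [simp]: "Qp p 0 = 1"
proof -
  have e: "{i. 1 \<le> i \<and> i \<le> 0 * p \<and> \<not> p dvd i} = {}" by auto
  show ?thesis unfolding Qp_def e by simp
qed

lemma Vprod:
  assumes p: "0 < p"
  shows "(\<Prod>m\<in>{1..b}. of_nat m * (\<Prod>i\<in>Iset r p. 1 + of_nat (m - 1) * of_nat p * (of_nat r / of_nat i)))
     = of_nat (fact b) * Qp p (b * r) / Qp p r ^ b"
proof (induction b)
  case 0 then show ?case by simp
next
  case (Suc b)
  have i0: "\<And>i. i \<in> Iset r p \<Longrightarrow> (of_nat i :: rat) \<noteq> 0" by (auto simp: Iset_def)
  have "(\<Prod>i\<in>Iset r p. 1 + of_nat b * of_nat p * (of_nat r / of_nat i))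
      = (\<Prod>i\<in>Iset r p. (of_nat i + of_nat (b * r * p)) / (of_nat i :: rat))"
    by (rule prod.cong[OF refl]) (use i0 in \<open>simp add: field_simps\<close>)
  also have "\<dots> = (\<Prod>i\<in>Iset r p. (of_nat i + of_nat (b * r * p) :: rat)) / Qp p r"
    by (simp add: prod_dividef Qp_I[OF p])
  also have "\<dots> = Qp p (Suc b * r) / (Qp p (b * r) * Qp p r)"
    using Qp_step[OF p, where r=r and b=b] Qp_nz[of p "b * r"] Qp_nz[of p r] by (simp add: field_simps)
  finally have st: "(\<Prod>i\<in>Iset r p. 1 + of_nat b * of_nat p * (of_nat r / of_nat i)) = Qp p (Suc b * r) / (Qp p (b * r) * Qp p r)" .
  have "(\<Prod>m\<in>{1..Suc b}. of_nat m * (\<Prod>i\<in>Iset r p. 1 + of_nat (m - 1) * of_nat p * (of_nat r / of_nat i)))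
      = (\<Prod>m\<in>{1..b}. of_nat m * (\<Prod>i\<in>Iset r p. 1 + of_nat (m - 1) * of_nat p * (of_nat r / of_nat i)))
        * (of_nat (Suc b) * (\<Prod>i\<in>Iset r p. 1 + of_nat b * of_nat p * (of_nat r / of_nat i)))"
    by (simp add: prod.nat_ivl_Suc' mult.commute)
  also have "\<dots> = of_nat (fact (Suc b)) * Qp p (Suc b * r) / Qp p r ^ Suc b"
    unfolding Suc.IH st using Qp_nz[of p "b * r"] Qp_nz[of p r] by (simp add: field_simps)
  finally show ?case .
qed

lemma Vprod_fact:
  assumes p: "0 < p"
  shows "(\<Prod>m\<in>{1..b}. of_nat m * (\<Prod>i\<in>Iset r p. 1 + of_nat (m - 1) * of_nat p * (of_nat r / of_nat i)))
     = (of_nat (fact b) * of_nat (fact r) ^ b * of_nat (fact (b * r * p)) / (of_nat (fact (b * r)) * of_nat (fact (r * p)) ^ b) :: rat)"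
proof -
  have a: "of_nat (fact (b * r * p)) = Qp p (b * r) * of_nat p ^ (b * r) * (of_nat (fact (b * r)) :: rat)"
    using Qp_fact[OF p, of "b * r"] by simp
  have c: "of_nat (fact (r * p)) = Qp p r * of_nat p ^ r * (of_nat (fact r) :: rat)"
    using Qp_fact[OF p, of r] by simp
  have nz: "(of_nat p :: rat) \<noteq> 0" "(of_nat (fact r) :: rat) \<noteq> 0" "(of_nat (fact (b * r)) :: rat) \<noteq> 0"
    using p by auto
  have c': "(of_nat (fact (r * p)) :: rat) ^ b = Qp p r ^ b * of_nat p ^ (b * r) * of_nat (fact r) ^ b"
    unfolding c by (simp add: power_mult_distrib mult.commute[of r b] flip: power_mult)
  have q: "Qp p r ^ b \<noteq> 0" using Qp_nz[of p r] by simp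
  have pb: "(of_nat p :: rat) ^ (b * r) \<noteq> 0" "(of_nat (fact r) :: rat) ^ b \<noteq> 0" using nz by auto
  show ?thesis unfolding Vprod[OF p] a c'
    using nz(3) q pb p by (simp add: divide_simps)
qed




unbundle fps_syntax

section \<open>rcirc as rescaling of zeta\<close>

lemma mono_scale: "mmono (\<lambda>j. c ^ j * z j) \<mu> = c ^ mweight \<mu> * mmono z \<mu>"
  unfolding mmono_def mweight_def power_sum
  by (simp add: power_mult_distrib prod.distrib power_mult)

lemma mev_mapp: "mev z (Poly_Mapping.mapp (\<lambda>\<mu> a. c ^ mweight \<mu> * a) P) = mev (\<lambda>j. c ^ j * z j) P"
proof -
  have "mev z (Poly_Mapping.mapp (\<lambda>\<mu> a. c ^ mweight \<mu> * a) P)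
      = (\<Sum>\<mu>\<in>Poly_Mapping.keys P. Poly_Mapping.lookup (Poly_Mapping.mapp (\<lambda>\<mu> a. c ^ mweight \<mu> * a) P) \<mu> * mmono z \<mu>)"
    by (rule mev_superset) (auto simp: keys_mapp_subset[THEN subsetD])
  also have "\<dots> = (\<Sum>\<mu>\<in>Poly_Mapping.keys P. Poly_Mapping.lookup P \<mu> * mmono (\<lambda>j. c ^ j * z j) \<mu>)"
    by (intro sum.cong refl) (simp add: lookup_mapp mono_scale when_def)
  also have "\<dots> = mev (\<lambda>j. c ^ j * z j) P"
    by (simp add: mev_def mmono_def)
  finally show ?thesis .
qed

lemma tr_rcirc: "tr zeta p M N (rcirc c f) = tr (zr c zeta) p M N f"
  by (simp add: tr_def rcirc_def mev_mapp zr_def)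

lemma per_rcirc: "per_eq zeta (rcirc c f) d \<longleftrightarrow> per_eq (zr c zeta) f d"
  by (simp add: per_eq_EV tr_rcirc)

lemma zr_one: "zr 1 zeta = zeta"
  by (simp add: zr_def)

lemma per_eq_cong:
  assumes "per_eq Z f c" "\<And>p. prime p \<Longrightarrow> c p = d p"
  shows "per_eq Z f d"
  using assms(1) unfolding per_eq_def
  by (auto elim!: eventually_mono simp: assms(2))

lemma fps_prod_nth0: "(prod f A) $ 0 = (\<Prod>a\<in>A. (f a) $ 0 :: 'a :: comm_ring_1)"
  by (induction A rule: infinite_finite_induct) auto

lemma ca_nth0: "ca m $ 0 = of_nat m"
  by (simp add: ca_def)

lemma of_nat_mpoly: "(of_nat k :: mpoly) = mconst (of_nat k)"
  by (simp add: mconst_def)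

lemma mconst_prod: "(\<Prod>a\<in>A. mconst (f a)) = mconst (\<Prod>a\<in>A. f a)"
  by (induction A rule: infinite_finite_induct) (auto simp: mconst_mult)

lemma F_inverse:
  "\<exists>G. (\<Prod>m\<in>{1..b}. ca m) * G = 1"
proof -
  have "(\<Prod>m\<in>{1..b}. ca m) $ 0 = mconst (of_nat (fact b))"
    by (simp add: fps_prod_nth0 ca_nth0 fact_prod of_nat_mpoly mconst_prod)
  then have "(\<Prod>m\<in>{1..b}. ca m) $ 0 * mconst (1 / of_nat (fact b)) = 1"
    by (simp add: mconst_mult[symmetric])
  then show ?thesis using fps_right_inverse by blast
qed

section \<open>Degree zero\<close>

definition phi :: "mpoly fps \<Rightarrow> rat fps" where
  "phi f = Abs_fps (\<lambda>k. mev (\<lambda>_. 0) (f $ k))"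

lemma phi_add: "phi (f + g) = phi f + phi g"
  by (simp add: phi_def mev_add fps_eq_iff)
lemma phi_mult: "phi (f * g) = phi f * phi g"
  by (simp add: phi_def fps_eq_iff fps_mult_nth mev_sum mev_mult)
lemma phi_one: "phi 1 = 1"
  by (simp add: phi_def fps_eq_iff)
lemma phi_const: "phi (fps_const (mconst q)) = fps_const q"
  by (simp add: phi_def fps_eq_iff)
lemma phi_zero: "phi 0 = 0"
  by (simp add: phi_def fps_eq_iff)
lemma phi_sum: "phi (sum f A) = (\<Sum>a\<in>A. phi (f a))"
  by (induction A rule: infinite_finite_induct) (auto simp: phi_add phi_zero)
lemma phi_prod: "phi (prod f A) = (\<Prod>a\<in>A. phi (f a))"
  by (induction A rule: infinite_finite_induct) (auto simp: phi_mult phi_one)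
lemma phi_power: "phi (f ^ k) = phi f ^ k"
  by (induction k) (auto simp: phi_mult phi_one)

lemma phi_Ha: "phi (Ha n) = 0"
  by (simp add: phi_def fps_eq_iff Ha_def mev_mult mev_zeta_a)

lemma phi_Ha1: "phi (Ha1 j) = (if j = 0 then 1 else 0)"
  by (cases j) (simp_all add: phi_one phi_mult phi_sum phi_Ha del: sum.lessThan_Suc)

lemma phi_ca: "phi (ca m) = fps_const (of_nat m)"
proof (rule fps_ext)
  fix k
  have h: "mev (\<lambda>_. 0) (Ha1 j $ l) = (if j = 0 \<and> l = 0 then 1 else 0)" for j l
    using arg_cong[OF phi_Ha1[of j], of "\<lambda>f. f $ l"] by (simp add: phi_def split: if_splits)
  show "phi (ca m) $ k = fps_const (of_nat m) $ k"
    by (cases k) (simp_all add: phi_def ca_def mev_mult mev_sum h mev_power)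
qed

lemma mev0_lookup: "mev (\<lambda>_. 0) P = Poly_Mapping.lookup P 0"
proof -
  have m: "mmono (\<lambda>_. 0) \<mu> = (if \<mu> = 0 then 1 else 0)" for \<mu>
  proof (cases "\<mu> = 0")
    case False
    then obtain k where k: "k \<in> Poly_Mapping.keys \<mu>" by (metis keys_eq_empty ex_in_conv)
    then have "(0::rat) ^ Poly_Mapping.lookup \<mu> k = 0" by (simp add: in_keys_iff)
    then have "mmono (\<lambda>_. 0) \<mu> = 0" unfolding mmono_def using k by (intro prod_zero) auto
    then show ?thesis using False by simp
  qed simp
  have "mev (\<lambda>_. 0) P = (\<Sum>\<mu>\<in>Poly_Mapping.keys P \<union> {0}. Poly_Mapping.lookup P \<mu> * mmono (\<lambda>_. 0) \<mu>)"
    by (rule mev_superset) auto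
  also have "\<dots> = Poly_Mapping.lookup P 0"
    unfolding m by (simp add: if_distrib[of "\<lambda>x. _ * x"] cong: if_cong)
  finally show ?thesis .
qed

lemma deg0_phi: "deg0 f = Abs_fps (\<lambda>k. mconst (phi f $ k))"
  by (simp add: deg0_def phi_def mev0_lookup)

lemma zpow_const:
  assumes "c \<noteq> 0"
  shows "zpow (fps_const (c :: rat)) k = fps_const (c powi k)"
proof -
  have inv: "zinv (fps_const c) = fps_const (1 / c)"
  proof (rule zinv_eq)
    have "fps_const c * fps_const (1 / c) = fps_const (c * (1 / c))" by simp
    then show "fps_const c * fps_const (1 / c) = 1" using assms by simp
  qed
  show ?thesis
    by (simp add: zpow_def inv power_int_def fps_const_power divide_inverse)
qed

lemma phi_zpow:
  assumes "F * G = 1"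
  shows "phi (zpow F k) = zpow (phi F) k"
proof -
  have "phi F * phi G = 1" using arg_cong[OF assms, of phi] by (simp add: phi_mult phi_one)
  then show ?thesis
    by (simp add: zpow_def zinv_eq[OF assms] zinv_eq phi_power)
qed




unbundle fps_syntax

definition Vv :: "nat \<Rightarrow> nat \<Rightarrow> nat \<Rightarrow> rat" where
  "Vv r bb p = (\<Prod>m\<in>{1..bb}. of_nat m * (\<Prod>i\<in>Iset r p. 1 + of_nat (m - 1) * of_nat p * (of_nat r / of_nat i)))"

lemma per_alpha_r:
  assumes zd: "padic_zeta_data zeta" and r: "1 \<le> r"
  shows "per_eq (zr (of_nat r) zeta) (alpha_a K b n) (\<lambda>p. \<Prod>i<K. Vv r (b i) p powi n i)"
proof -
  have z: "ZD (zr (of_nat r) zeta)" by (rule ZD_zr[OF ZD_zeta[OF zd]])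
  have yint: "\<forall>\<^sub>F p in sequentially. prime p \<longrightarrow> (\<forall>i\<in>Iset r p. pg p 0 (of_nat r / of_nat i))"
  proof (rule always_eventually, intro allI impI ballI)
    fix p i assume pp: "prime p" and i: "i \<in> Iset r p"
    then have "\<not> p dvd i" by (simp add: Iset_def)
    then have "pg p 0 (of_nat r * (1 / of_nat i))" by (intro pg_mult0[OF pp] pg_nat[OF pp] pg_inv_nat[OF pp])
    then show "pg p 0 (of_nat r / of_nat i)" by simp
  qed
  have H: "\<forall>n\<ge>1. per_eq (zr (of_nat r) zeta) (Ha n) (\<lambda>p. \<Sum>i\<in>Iset r p. (of_nat r / of_nat i) ^ n)"
    using per_Ha_r[OF zd r] by blast
  have fin: "\<forall>p. finite (Iset r p)" by (simp add: Iset_def)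
  have ca: "per_eq (zr (of_nat r) zeta) (ca m) (\<lambda>p. of_nat m * (\<Prod>i\<in>Iset r p. 1 + of_nat (m - 1) * of_nat p * (of_nat r / of_nat i)))" for m
    using per_ca[OF z H fin yint, of m] .
  have F: "per_eq (zr (of_nat r) zeta) (\<Prod>m\<in>{1..bb}. ca m) (Vv r bb)" for bb
    unfolding Vv_def by (rule per_prod[OF z ca])
  show ?thesis unfolding alpha_a_def
  proof (rule per_prod[OF z])
    fix i assume "i \<in> {..<K}"
    obtain G where G: "(\<Prod>m\<in>{1..b i}. ca m) * G = 1" using F_inverse by blast
    show "per_eq (zr (of_nat r) zeta) (zpow (\<Prod>m\<in>{1..b i}. ca m) (n i)) (\<lambda>p. Vv r (b i) p powi n i)"
      by (rule per_zpow[OF z F G])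
  qed
qed

lemma prod_powi_sum:
  assumes "(y :: rat) \<noteq> 0"
  shows "(\<Prod>i\<in>A. y powi f i) = y powi (\<Sum>i\<in>A. f i)"
  by (induction A rule: infinite_finite_induct) (auto simp: power_int_add assms)

lemma value_eq:
  assumes p: "0 < p" and sz: "(\<Sum>i<K. n i * int (b i)) = 0"
  shows "(\<Prod>i<K. Vv r (b i) p powi n i) =
    (\<Prod>i<K. (of_nat (fact (b i)) * of_nat (fact r) ^ b i / of_nat (fact (r * b i))
                            * of_nat (fact (r * b i * p))) powi n i)"
proof -
  let ?y = "of_nat (fact (r * p)) :: rat"
  let ?t = "\<lambda>i. (of_nat (fact (b i)) * of_nat (fact r) ^ b i / of_nat (fact (r * b i))
                            * of_nat (fact (r * b i * p)) :: rat)"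
  have y0: "?y \<noteq> 0" by simp
  have V: "Vv r (b i) p = ?t i / ?y ^ b i" for i
    unfolding Vv_def Vprod_fact[OF p] by (simp add: mult.commute[of r] mult.left_commute[of r])
  have "(\<Prod>i<K. Vv r (b i) p powi n i) = (\<Prod>i<K. ?t i powi n i / ?y powi (int (b i) * n i))"
    unfolding V power_int_divide_distrib by (simp add: power_int_mult)
  also have "\<dots> = (\<Prod>i<K. ?t i powi n i) / (\<Prod>i<K. ?y powi (int (b i) * n i))"
    by (rule prod_dividef)
  also have "(\<Prod>i<K. ?y powi (int (b i) * n i)) = 1"
    using prod_powi_sum[OF y0, of "\<lambda>i. int (b i) * n i" "{..<K}"] sz by (simp add: mult.commute)
  finally show ?thesis by simp
qed

lemma fps_const_prod': "fps_const (\<Prod>a\<in>A. f a) = (\<Prod>a\<in>A. fps_const (f a) :: 'a::comm_ring_1 fps)"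
  by (induction A rule: infinite_finite_induct) (auto simp: fps_const_mult[symmetric] simp del: fps_const_mult)

lemma deg0_alpha:
  "deg0 (alpha_a K b n) = fps_const (mconst (\<Prod>i<K. (of_nat (fact (b i))) powi n i))"
proof -
  have phiF: "phi (\<Prod>m\<in>{1..bb}. ca m) = fps_const (of_nat (fact bb))" for bb
    by (simp add: phi_prod phi_ca fact_prod fps_const_prod')
  have "phi (alpha_a K b n) = (\<Prod>i<K. fps_const ((of_nat (fact (b i)) :: rat) powi n i))"
    unfolding alpha_a_def phi_prod
  proof (rule prod.cong[OF refl])
    fix i
    obtain G where G: "(\<Prod>m\<in>{1..b i}. ca m) * G = 1" using F_inverse by blast
    show "phi (zpow (\<Prod>m\<in>{1..b i}. ca m) (n i)) = fps_const (of_nat (fact (b i)) powi n i)"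
      unfolding phi_zpow[OF G] phiF by (rule zpow_const) simp
  qed
  also have "\<dots> = fps_const (\<Prod>i<K. (of_nat (fact (b i)) :: rat) powi n i)"
    by (simp add: fps_const_prod')
  finally have ph: "phi (alpha_a K b n) = fps_const (\<Prod>i<K. (of_nat (fact (b i)) :: rat) powi n i)" .
  show ?thesis unfolding deg0_phi ph
    by (rule fps_ext) (simp add: mconst_def)
qed

theorem mainTheorem11:
  fixes zeta :: "nat \<Rightarrow> nat \<Rightarrow> nat \<Rightarrow> rat"
    and K :: nat and b :: "nat \<Rightarrow> nat" and n :: "nat \<Rightarrow> int"
  assumes "padic_zeta_data zeta"
    and "\<forall>i<K. 0 < b i"
    and "(\<Sum>i<K. n i * int (b i)) = 0"
  shows "(\<forall>r::nat. 0 < r \<longrightarrow>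
           per_eq zeta (rcirc (of_nat r) (alpha_a K b n))
             (\<lambda>p. \<Prod>i<K. (of_nat (fact (b i)) * of_nat (fact r) ^ b i / of_nat (fact (r * b i))
                            * of_nat (fact (r * b i * p))) powi n i))
       \<and> per_eq zeta (alpha_a K b n) (\<lambda>p. \<Prod>i<K. (of_nat (fact (b i * p))) powi n i)
       \<and> deg0 (alpha_a K b n) = fps_const (mconst (\<Prod>i<K. (of_nat (fact (b i))) powi n i))"
proof -
  have first: "per_eq zeta (rcirc (of_nat r) (alpha_a K b n))
             (\<lambda>p. \<Prod>i<K. (of_nat (fact (b i)) * of_nat (fact r) ^ b i / of_nat (fact (r * b i))
                            * of_nat (fact (r * b i * p))) powi n i)" if r: "0 < r" for r
    unfolding per_rcirc
  proof (rule per_eq_cong[OF per_alpha_r[OF assms(1)]])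
    show "1 \<le> r" using r by simp
  next
    fix p :: nat assume "prime p"
    then show "(\<Prod>i<K. Vv r (b i) p powi n i) =
       (\<Prod>i<K. (of_nat (fact (b i)) * of_nat (fact r) ^ b i / of_nat (fact (r * b i))
                            * of_nat (fact (r * b i * p))) powi n i)"
      by (rule value_eq[OF prime_gt_0_nat assms(3)])
  qed
  have second: "per_eq zeta (alpha_a K b n) (\<lambda>p. \<Prod>i<K. (of_nat (fact (b i * p))) powi n i)"
  proof -
    have "per_eq zeta (rcirc (of_nat 1) (alpha_a K b n))
             (\<lambda>p. \<Prod>i<K. (of_nat (fact (b i)) * of_nat (fact 1) ^ b i / of_nat (fact (1 * b i))
                            * of_nat (fact (1 * b i * p))) powi n i)"
      by (rule first) simp
    then have "per_eq (zr 1 zeta) (alpha_a K b n)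
             (\<lambda>p. \<Prod>i<K. (of_nat (fact (b i)) * of_nat (fact 1) ^ b i / of_nat (fact (1 * b i))
                            * of_nat (fact (1 * b i * p))) powi n i)"
      unfolding per_rcirc by simp
    then show ?thesis unfolding zr_one by simp
  qed
  show ?thesis using first second deg0_alpha by blast
qed


end
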